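(* Let $N\ge1$, let $V$ be the vertex set of the infinite $N$-ary tree and $\Delta$ its graph Laplacian on $l^2(V)$. Then the spectrum of $\Delta$ is $[N+1-2\sqrt N,\,N+1+2\sqrt N]$, and $\Delta$ has no eigenvalues.
   Context: $V$ is the set of finite words over $\{1,\dots,N\}$ including the empty word $\emptyset$; the $N$-ary tree has edges exactly the pairs $\{\omega,\omega i\}$, $\omega\in V$, $i\in\{1,\dots,N\}$, where $\omega i$ is $\omega$ with the letter $i$ appended. $\Delta$ is the graph Laplacian with conductance $1$: $(\Delta v)(x)=\sum_{y\sim x}(v(x)-v(y))$, a bounded selfadjoint operator on $l^2(V)$. *)

theory Defs
  imports "HOL-Analysis.Analysis"
begin

text \<open>Vertices of the infinite N-ary tree: finite words over the alphabet {1..N}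
  (the empty word is the root). Edges: {w, w@[i]} for i in {1..N}.\<close>
definition tree_V :: "nat \<Rightarrow> nat list set" where
  "tree_V N = {w. set w \<subseteq> {1..N}}"

definition l2 :: "nat \<Rightarrow> (nat list \<Rightarrow> complex) set" where
  "l2 N = {v. (\<forall>w. w \<notin> tree_V N \<longrightarrow> v w = 0) \<and>
              (\<lambda>w. (norm (v w))\<^sup>2) summable_on tree_V N}"

definition l2_norm :: "nat \<Rightarrow> (nat list \<Rightarrow> complex) \<Rightarrow> real" where
  "l2_norm N v = sqrt (infsum (\<lambda>w. (norm (v w))\<^sup>2) (tree_V N))"

definition tree_laplacian :: "nat \<Rightarrow> (nat list \<Rightarrow> complex) \<Rightarrow> nat list \<Rightarrow> complex" where
  "tree_laplacian N v x =
     (if x \<in> tree_V N then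
        (\<Sum>i\<in>{1..N}. v x - v (x @ [i])) + (if x = [] then 0 else v x - v (butlast x))
      else 0)"

definition tree_spectrum :: "nat \<Rightarrow> complex set" where
  "tree_spectrum N = {mu. \<not> (\<exists>S. (\<forall>v\<in>l2 N. S v \<in> l2 N) \<and>
        (\<exists>C. \<forall>v\<in>l2 N. l2_norm N (S v) \<le> C * l2_norm N v) \<and>
        (\<forall>v\<in>l2 N. S (\<lambda>x. tree_laplacian N v x - mu * v x) = v) \<and>
        (\<forall>v\<in>l2 N. (\<lambda>x. tree_laplacian N (S v) x - mu * S v x) = v))}"

definition tree_eigenvalues :: "nat \<Rightarrow> complex set" where
  "tree_eigenvalues N = {mu. \<exists>v\<in>l2 N. v \<noteq> (\<lambda>_. 0) \<and> tree_laplacian N v = (\<lambda>x. mu * v x)}"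

end

theory Submission
  imports Defs
begin


definition Tw :: "nat \<Rightarrow> nat \<Rightarrow> nat list set" where
  "Tw N k = {t. set t \<subseteq> {1..N} \<and> length t = k}"

definition n2 :: "nat \<Rightarrow> (nat list \<Rightarrow> complex) \<Rightarrow> real" where
  "n2 N f = infsum (\<lambda>w. (norm (f w))\<^sup>2) (tree_V N)"

lemma Tw_finite[simp]: "finite (Tw N k)"
  unfolding Tw_def by (rule finite_lists_length_eq) simp

lemma Tw_card: "card (Tw N k) = N ^ k"
  unfolding Tw_def using card_lists_length_eq[of "{1..N}" k] by simp

lemma Tw_Suc_front: "Tw N (Suc k) = (\<lambda>(i,t). i # t) ` ({1..N} \<times> Tw N k)"
proof -
  have "\<exists>i\<in>{1..N}. \<exists>t'. set t' \<subseteq> {1..N} \<and> length t' = k \<and> t = i # t'"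
    if "set t \<subseteq> {1..N}" "length t = Suc k" for t
    using that by (cases t) auto
  then show ?thesis unfolding Tw_def by (auto simp: image_iff Bex_def)
qed

lemma Tw_Suc_back: "Tw N (Suc k) = (\<lambda>(t,i). t @ [i]) ` (Tw N k \<times> {1..N})"
proof -
  have "\<exists>t'. set t' \<subseteq> {1..N} \<and> length t' = k \<and> (\<exists>i\<in>{1..N}. t = t' @ [i])"
    if "set t \<subseteq> {1..N}" "length t = Suc k" for t
    using that by (cases t rule: rev_cases) auto
  then show ?thesis unfolding Tw_def by (auto simp: image_iff Bex_def)
qed

lemma sum_Tw_Suc_front:
  "(\<Sum>t\<in>Tw N (Suc k). f t) = (\<Sum>i\<in>{1..N}. \<Sum>t\<in>Tw N k. f (i # t))"
proof -
  have "inj_on (\<lambda>(i,t). i # t) ({1..N} \<times> Tw N k)" by (auto simp: inj_on_def)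
  then have "(\<Sum>t\<in>Tw N (Suc k). f t) = (\<Sum>p\<in>{1..N} \<times> Tw N k. f (fst p # snd p))"
    unfolding Tw_Suc_front by (subst sum.reindex) (auto intro!: sum.cong)
  also have "\<dots> = (\<Sum>i\<in>{1..N}. \<Sum>t\<in>Tw N k. f (i # t))"
    unfolding sum.cartesian_product by (simp add: split_def)
  finally show ?thesis .
qed

lemma sum_Tw_Suc_back:
  "(\<Sum>t\<in>Tw N (Suc k). f t) = (\<Sum>t\<in>Tw N k. \<Sum>i\<in>{1..N}. f (t @ [i]))"
proof -
  have "inj_on (\<lambda>(t,i). t @ [i]) (Tw N k \<times> {1..N})" by (auto simp: inj_on_def)
  then have "(\<Sum>t\<in>Tw N (Suc k). f t) = (\<Sum>p\<in>Tw N k \<times> {1..N}. f (fst p @ [snd p]))"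
    unfolding Tw_Suc_back by (subst sum.reindex) (auto intro!: sum.cong)
  also have "\<dots> = (\<Sum>t\<in>Tw N k. \<Sum>i\<in>{1..N}. f (t @ [i]))"
    unfolding sum.cartesian_product by (simp add: split_def)
  finally show ?thesis .
qed

lemma tree_V_append[simp]: "x @ y \<in> tree_V N \<longleftrightarrow> x \<in> tree_V N \<and> y \<in> tree_V N"
  unfolding tree_V_def by auto

lemma tree_V_Nil[simp]: "[] \<in> tree_V N" unfolding tree_V_def by auto

lemma tree_V_snoc[simp]: "x @ [i] \<in> tree_V N \<longleftrightarrow> x \<in> tree_V N \<and> i \<in> {1..N}"
  unfolding tree_V_def by auto

lemma tree_V_single[simp]: "[i] \<in> tree_V N \<longleftrightarrow> i \<in> {1..N}"
  unfolding tree_V_def by auto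

lemma Tw_sub: "t \<in> Tw N k \<Longrightarrow> t \<in> tree_V N"
  unfolding Tw_def tree_V_def by auto

lemma level_eq: "{y \<in> tree_V N. length y = m} = Tw N m"
  unfolding Tw_def tree_V_def by auto

lemma n2_nonneg: "n2 N f \<ge> 0"
  unfolding n2_def by (rule infsum_nonneg) simp

lemma l2_norm_n2: "l2_norm N f = sqrt (n2 N f)"
  unfolding l2_norm_def n2_def ..

lemma l2_sum_le:
  assumes "f \<in> l2 N" "finite F" "F \<subseteq> tree_V N"
  shows "(\<Sum>x\<in>F. (norm (f x))\<^sup>2) \<le> n2 N f"
  unfolding n2_def using assms unfolding l2_def
  by (intro finite_sum_le_infsum) auto

lemma l2_intro:
  assumes "\<And>x. x \<notin> tree_V N \<Longrightarrow> f x = 0"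
    and "\<And>F. finite F \<Longrightarrow> F \<subseteq> tree_V N \<Longrightarrow> (\<Sum>x\<in>F. (norm (f x))\<^sup>2) \<le> B"
  shows "f \<in> l2 N" "n2 N f \<le> B"
proof -
  have s: "(\<lambda>w. (norm (f w))\<^sup>2) summable_on tree_V N"
    by (rule nonneg_bdd_above_summable_on) (use assms(2) in \<open>auto simp: bdd_above_def\<close>)
  then show "f \<in> l2 N" unfolding l2_def using assms(1) by auto
  show "n2 N f \<le> B" unfolding n2_def by (rule infsum_le_finite_sums[OF s assms(2)])
qed

lemma l2_zero_out: "f \<in> l2 N \<Longrightarrow> x \<notin> tree_V N \<Longrightarrow> f x = 0"
  unfolding l2_def by auto



lemma CS_weighted:
  fixes w a :: "'i \<Rightarrow> real"
  assumes "finite A" "\<And>i. i \<in> A \<Longrightarrow> w i \<ge> 0"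
  shows "(\<Sum>i\<in>A. w i * a i)\<^sup>2 \<le> (\<Sum>i\<in>A. w i) * (\<Sum>i\<in>A. w i * (a i)\<^sup>2)"
proof -
  have "0 \<le> (\<Sum>i\<in>A. \<Sum>j\<in>A. w i * w j * (a i - a j)\<^sup>2)"
    using assms by (intro sum_nonneg mult_nonneg_nonneg) auto
  also have "(\<Sum>i\<in>A. \<Sum>j\<in>A. w i * w j * (a i - a j)\<^sup>2)
     = (\<Sum>i\<in>A. \<Sum>j\<in>A. (w i * (a i)\<^sup>2 * w j + w i * (w j * (a j)\<^sup>2)) - 2 * ((w i * a i) * (w j * a j)))"
    by (intro sum.cong refl) (simp add: power2_eq_square algebra_simps)
  also have "\<dots> = (\<Sum>i\<in>A. \<Sum>j\<in>A. w i * (a i)\<^sup>2 * w j) + (\<Sum>i\<in>A. \<Sum>j\<in>A. w i * (w j * (a j)\<^sup>2))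
       - 2 * (\<Sum>i\<in>A. \<Sum>j\<in>A. (w i * a i) * (w j * a j))"
    by (simp add: sum.distrib sum_subtractf sum_distrib_left)
  also have "\<dots> = 2 * ((\<Sum>i\<in>A. w i) * (\<Sum>i\<in>A. w i * (a i)\<^sup>2) - (\<Sum>i\<in>A. w i * a i)\<^sup>2)"
  proof -
    have e1: "(\<Sum>i\<in>A. \<Sum>j\<in>A. w i * (a i)\<^sup>2 * w j) = (\<Sum>i\<in>A. w i * (a i)\<^sup>2) * (\<Sum>i\<in>A. w i)"
      by (rule sum_product[symmetric])
    have e2: "(\<Sum>i\<in>A. \<Sum>j\<in>A. w i * (w j * (a j)\<^sup>2)) = (\<Sum>i\<in>A. w i) * (\<Sum>i\<in>A. w i * (a i)\<^sup>2)"
      by (rule sum_product[symmetric])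
    have e3: "(\<Sum>i\<in>A. \<Sum>j\<in>A. (w i * a i) * (w j * a j)) = (\<Sum>i\<in>A. w i * a i)\<^sup>2"
      unfolding power2_eq_square by (rule sum_product[symmetric])
    show ?thesis unfolding e1 e2 e3 by (simp add: algebra_simps)
  qed
  finally show ?thesis by simp
qed

lemma CS_card:
  fixes a :: "'i \<Rightarrow> real"
  assumes "finite A"
  shows "(\<Sum>i\<in>A. a i)\<^sup>2 \<le> real (card A) * (\<Sum>i\<in>A. (a i)\<^sup>2)"
  using CS_weighted[OF assms, of "\<lambda>_. 1" a] by simp

lemma CS_card_complex:
  fixes a :: "'i \<Rightarrow> complex"
  assumes "finite A"
  shows "(norm (\<Sum>i\<in>A. a i))\<^sup>2 \<le> real (card A) * (\<Sum>i\<in>A. (norm (a i))\<^sup>2)"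
proof -
  have "norm (\<Sum>i\<in>A. a i) \<le> (\<Sum>i\<in>A. norm (a i))" by (rule norm_sum)
  then have "(norm (\<Sum>i\<in>A. a i))\<^sup>2 \<le> (\<Sum>i\<in>A. norm (a i))\<^sup>2"
    by (intro power_mono) auto
  also have "\<dots> \<le> real (card A) * (\<Sum>i\<in>A. (norm (a i))\<^sup>2)" by (rule CS_card[OF assms])
  finally show ?thesis .
qed

lemma root_choice:
  fixes lam :: complex
  obtains r where "r \<noteq> 0" "norm r \<le> 1" "lam = r + inverse r"
    "norm r = 1 \<Longrightarrow> lam \<in> \<real> \<and> \<bar>Re lam\<bar> \<le> 2"
proof -
  define s where "s = csqrt (lam\<^sup>2 / 4 - 1)"
  define r1 where "r1 = lam / 2 + s"
  define r2 where "r2 = lam / 2 - s"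
  have ss: "s\<^sup>2 = lam\<^sup>2 / 4 - 1" unfolding s_def by simp
  have p: "r1 * r2 = 1" unfolding r1_def r2_def
  proof -
    have "(lam / 2 + s) * (lam / 2 - s) = lam\<^sup>2/4 - s\<^sup>2" by (simp add: power2_eq_square field_simps)
    then show "(lam / 2 + s) * (lam / 2 - s) = 1" using ss by simp
  qed
  have sum: "r1 + r2 = lam" unfolding r1_def r2_def by simp
  have nz: "r1 \<noteq> 0" "r2 \<noteq> 0" using p by auto
  have inv: "r2 = inverse r1" "r1 = inverse r2" using p
    by (metis inverse_unique, metis inverse_unique mult.commute)
  have np: "norm r1 * norm r2 = 1"
  proof -
    have "norm (r1 * r2) = 1" using p by simp
    then show ?thesis by (simp add: norm_mult)
  qed
  have key: "lam \<in> \<real> \<and> \<bar>Re lam\<bar> \<le> 2" if "norm r = 1" "lam = r + inverse r" for r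
  proof -
    have "r * cnj r = 1" using complex_norm_square[of r] that(1) by simp
    then have "inverse r = cnj r" by (metis inverse_unique)
    then have l: "lam = complex_of_real (2 * Re r)" using that(2) complex_add_cnj by simp
    have "\<bar>Re r\<bar> \<le> 1" using abs_Re_le_cmod[of r] that(1) by simp
    then show ?thesis using l by auto
  qed
  show ?thesis
  proof (cases "norm r1 \<le> 1")
    case True
    have "lam = r1 + inverse r1" using sum inv(1) by simp
    then show ?thesis using that[of r1] nz True key[of r1] by blast
  next
    case False
    have "norm r2 = 1 / norm r1" using np nz by (simp add: field_simps)
    then have "norm r2 \<le> 1" using False by (simp add: divide_le_eq_1)
    moreover have "lam = r2 + inverse r2" using sum inv(2) by (simp add: add.commute)
    ultimately show ?thesis using that[of r2] nz key[of r2] by blast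
  qed
qed

lemma seq_lemma:
  fixes b :: "nat \<Rightarrow> complex"
  assumes lim: "b \<longlonglongrightarrow> 0" and rec: "\<And>k. b (Suc (Suc k)) = (r + inverse r) * b (Suc k) - b k"
    and r: "r \<noteq> 0" "norm r \<le> 1"
  shows "b 1 = r * b 0" "norm r = 1 \<Longrightarrow> b 0 = 0"
proof -
  define d where "d k = b (Suc k) - r * b k" for k
  have ds: "d (Suc k) = inverse r * d k" for k
  proof -
    have "d (Suc k) = (r + inverse r) * b (Suc k) - b k - r * b (Suc k)"
      unfolding d_def rec ..
    also have "\<dots> = inverse r * (b (Suc k) - r * b k)"
      using r by (simp add: field_simps)
    finally show ?thesis unfolding d_def .
  qed
  have dk: "d k = inverse r ^ k * d 0" for k by (induction k) (auto simp: ds)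
  have dge: "norm (d 0) \<le> norm (d k)" for k
  proof -
    have "1 \<le> norm (inverse r) ^ k" using r
      by (intro one_le_power) (simp add: norm_inverse one_le_inverse_iff)
    then have "norm (d 0) \<le> norm (inverse r) ^ k * norm (d 0)"
      using mult_right_mono[of 1 "norm (inverse r) ^ k" "norm (d 0)"] by simp
    then show ?thesis unfolding dk[of k] by (simp add: norm_mult norm_power)
  qed
  have "d \<longlonglongrightarrow> 0" unfolding d_def
    using tendsto_diff[OF LIMSEQ_Suc[OF lim] tendsto_mult[OF tendsto_const lim, of r]] by simp
  then have "(\<lambda>k. norm (d k)) \<longlonglongrightarrow> 0" by (rule tendsto_norm_zero)
  then have "norm (d 0) \<le> 0" by (rule LIMSEQ_le_const) (use dge in blast)
  then have d0: "d 0 = 0" by simp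
  then show "b 1 = r * b 0" unfolding d_def by simp
  assume n1: "norm r = 1"
  have dz: "d k = 0" for k unfolding dk[of k] d0 by simp
  have bk: "b k = r ^ k * b 0" for k
  proof (induction k)
    case (Suc k)
    have "b (Suc k) = r * b k" using dz[of k] unfolding d_def by simp
    then show ?case using Suc by simp
  qed simp
  have l: "(\<lambda>k. norm (b k)) \<longlonglongrightarrow> 0" using lim by (rule tendsto_norm_zero)
  have "(\<lambda>k. norm (b k)) = (\<lambda>k. norm (b 0))"
  proof
    fix k show "norm (b k) = norm (b 0)" unfolding bk[of k] using n1 by (simp add: norm_mult norm_power)
  qed
  then have "(\<lambda>k. norm (b 0)) \<longlonglongrightarrow> 0" using l by simp
  then have "norm (b 0) = 0" by (simp add: LIMSEQ_const_iff)
  then show "b 0 = 0" by simp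
qed


lemma Tw_0[simp]: "Tw N 0 = {[]}" unfolding Tw_def by auto

lemma lap_eq:
  assumes "x \<in> tree_V N"
  shows "tree_laplacian N v x = of_nat N * v x - (\<Sum>i\<in>{1..N}. v (x @ [i]))
           + (if x = [] then 0 else v x - v (butlast x))"
  using assms unfolding tree_laplacian_def by (simp add: sum_subtractf)

lemma sum_Tw_1: "(\<Sum>t\<in>Tw N (Suc 0). f t) = (\<Sum>i\<in>{1..N}. f [i])"
  using sum_Tw_Suc_back[where N=N and k=0 and f=f] by simp

lemma level_tendsto:
  assumes "v \<in> l2 N"
  shows "(\<lambda>m. \<Sum>y\<in>Tw N m. (norm (v y))\<^sup>2) \<longlonglongrightarrow> 0"
proof -
  let ?L = "\<lambda>m. \<Sum>y\<in>Tw N m. (norm (v y))\<^sup>2"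
  have "(\<Sum>m<M. ?L m) \<le> n2 N v" for M
  proof -
    have "(\<Sum>m<M. ?L m) = (\<Sum>y\<in>(\<Union>m<M. Tw N m). (norm (v y))\<^sup>2)"
      by (rule sum.UNION_disjoint[symmetric]) (simp_all, auto simp: Tw_def)
    also have "\<dots> \<le> n2 N v"
      by (rule l2_sum_le[OF assms]) (auto intro: Tw_sub)
    finally show ?thesis .
  qed
  then have "summable ?L" by (intro summableI_nonneg_bounded[where x="n2 N v"]) (auto intro: sum_nonneg)
  then show ?thesis by (rule summable_LIMSEQ_zero)
qed

lemma sub_level:
  assumes "x \<in> tree_V N"
  shows "(\<Sum>t\<in>Tw N k. (norm (v (x @ t)))\<^sup>2) \<le> (\<Sum>y\<in>Tw N (length x + k). (norm (v y))\<^sup>2)"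
proof -
  have "(\<Sum>t\<in>Tw N k. (norm (v (x @ t)))\<^sup>2) = (\<Sum>y\<in>(\<lambda>t. x @ t) ` Tw N k. (norm (v y))\<^sup>2)"
    by (subst sum.reindex) (auto simp: inj_on_def)
  also have "\<dots> \<le> (\<Sum>y\<in>Tw N (length x + k). (norm (v y))\<^sup>2)"
    using assms by (intro sum_mono2) (simp, fastforce simp: Tw_def tree_V_def, simp)
  finally show ?thesis .
qed

definition cs :: "nat \<Rightarrow> (nat list \<Rightarrow> complex) \<Rightarrow> nat list \<Rightarrow> nat \<Rightarrow> complex" where
  "cs N v x k = (\<Sum>t\<in>Tw N k. v (x @ t))"

lemma cs_bound:
  "(norm (cs N v x k))\<^sup>2 \<le> real N ^ k * (\<Sum>t\<in>Tw N k. (norm (v (x @ t)))\<^sup>2)"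
  unfolding cs_def using CS_card_complex[of "Tw N k" "\<lambda>t. v (x @ t)"] by (simp add: Tw_card)

lemma cs_rec:
  assumes eig: "\<And>y. y \<in> tree_V N \<Longrightarrow> y \<noteq> [] \<Longrightarrow> tree_laplacian N v y = mu * v y"
    and x: "x \<in> tree_V N"
  shows "cs N v x (Suc (Suc k)) = (of_nat N + 1 - mu) * cs N v x (Suc k) - of_nat N * cs N v x k"
proof -
  have e: "(\<Sum>i\<in>{1..N}. v (x @ t @ [i])) = (of_nat N + 1 - mu) * v (x @ t) - v (x @ butlast t)"
    if "t \<in> Tw N (Suc k)" for t
  proof -
    have t: "t \<noteq> []" "t \<in> tree_V N" using that Tw_sub[OF that] by (auto simp: Tw_def)
    have "tree_laplacian N v (x @ t) = mu * v (x @ t)" using eig x t by auto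
    then show ?thesis using t x by (simp add: lap_eq butlast_append algebra_simps)
  qed
  have "cs N v x (Suc (Suc k)) = (\<Sum>t\<in>Tw N (Suc k). \<Sum>i\<in>{1..N}. v (x @ t @ [i]))"
    unfolding cs_def by (subst sum_Tw_Suc_back) simp
  also have "\<dots> = (\<Sum>t\<in>Tw N (Suc k). (of_nat N + 1 - mu) * v (x @ t) - v (x @ butlast t))"
    by (rule sum.cong[OF refl e])
  also have "\<dots> = (of_nat N + 1 - mu) * cs N v x (Suc k) - (\<Sum>t\<in>Tw N (Suc k). v (x @ butlast t))"
    unfolding cs_def by (simp add: sum_subtractf sum_distrib_left)
  also have "(\<Sum>t\<in>Tw N (Suc k). v (x @ butlast t)) = of_nat N * cs N v x k"
    unfolding cs_def by (subst sum_Tw_Suc_back) (simp add: sum_distrib_left)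
  finally show ?thesis .
qed



lemma no_eig:
  assumes N: "N \<ge> 1" and v: "v \<in> l2 N" and eig: "\<And>x. tree_laplacian N v x = mu * v x"
  shows "v = (\<lambda>_. 0)"
proof -
  define s where "s = complex_of_real (sqrt (real N))"
  have sN: "s\<^sup>2 = of_nat N" unfolding s_def
    by (metis of_real_of_nat_eq of_real_power of_nat_0_le_iff real_sqrt_pow2)
  have sn: "norm s = sqrt (real N)" unfolding s_def by simp
  have s1: "norm s \<ge> 1" unfolding sn using N by simp
  then have s0: "s \<noteq> 0" by auto
  obtain r where r: "r \<noteq> 0" "norm r \<le> 1" "(of_nat N + 1 - mu) / s = r + inverse r"
    using root_choice by metis
  have lam: "of_nat N + 1 - mu = s * (r + inverse r)" using r(3) s0 by (simp add: field_simps)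
  have child: "(\<Sum>i\<in>{1..N}. v (x @ [i])) = r * s * v x \<and> (norm r = 1 \<longrightarrow> v x = 0)"
    if x: "x \<in> tree_V N" for x
  proof -
    define b where "b k = cs N v x k / s ^ k" for k
    have rec: "b (Suc (Suc k)) = (r + inverse r) * b (Suc k) - b k" for k
    proof -
      have "cs N v x (Suc (Suc k)) = (of_nat N + 1 - mu) * cs N v x (Suc k) - of_nat N * cs N v x k"
        by (rule cs_rec[OF _ x]) (use eig in auto)
      then have "b (Suc (Suc k)) = (s * (r + inverse r) * cs N v x (Suc k) - s\<^sup>2 * cs N v x k) / s ^ Suc (Suc k)"
        unfolding b_def lam sN by simp
      also have "\<dots> = (r + inverse r) * b (Suc k) - b k"
        unfolding b_def using s0 by (simp add: field_simps power2_eq_square)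
      finally show ?thesis .
    qed
    have lim: "b \<longlonglongrightarrow> 0"
    proof (rule Lim_null_comparison)
      let ?L = "\<lambda>m. \<Sum>y\<in>Tw N m. (norm (v y))\<^sup>2"
      show "\<forall>\<^sub>F k in sequentially. norm (b k) \<le> sqrt (?L (length x + k))"
      proof (rule always_eventually, rule allI)
        fix k
        have sq: "sqrt (real N) ^ (k * 2) = real N ^ k"
          by (simp add: mult.commute[of k 2] power_mult)
        have "(norm (b k))\<^sup>2 = (norm (cs N v x k))\<^sup>2 / real N ^ k"
          using sq unfolding b_def by (simp add: norm_divide norm_power sn power_divide real_sqrt_pow2 flip: power_mult_distrib power_mult)
        also have "\<dots> \<le> (\<Sum>t\<in>Tw N k. (norm (v (x @ t)))\<^sup>2)"
          using cs_bound[of N v x k] N by (simp add: divide_le_eq mult.commute)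
        also have "\<dots> \<le> ?L (length x + k)" by (rule sub_level[OF x])
        finally show "norm (b k) \<le> sqrt (?L (length x + k))" by (rule real_le_rsqrt)
      qed
      have "(\<lambda>k. ?L (length x + k)) \<longlonglongrightarrow> 0"
        using LIMSEQ_ignore_initial_segment[OF level_tendsto[OF v], of "length x"] by (simp add: add.commute)
      then show "(\<lambda>k. sqrt (?L (length x + k))) \<longlonglongrightarrow> 0"
        using tendsto_real_sqrt by fastforce
    qed
    note sl = seq_lemma[OF lim rec r(1,2)]
    have b0: "b 0 = v x" unfolding b_def cs_def by simp
    have b1: "b 1 = (\<Sum>i\<in>{1..N}. v (x @ [i])) / s" unfolding b_def cs_def
      using sum_Tw_1[where N=N and f="\<lambda>t. v (x @ t)"] by simp
    show ?thesis using sl b0 b1 s0 by (auto simp: field_simps)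
  qed
  show ?thesis
  proof (cases "norm r = 1")
    case True
    show ?thesis
    proof
      fix x show "v x = 0"
        using child[of x] True l2_zero_out[OF v, of x] by blast
    qed
  next
    case False
    then have rl: "norm r < 1" using r(2) by simp
    have step: "v (x @ [j]) = (r / s) * v x" if x: "x \<in> tree_V N" and j: "j \<in> {1..N}" for x j
    proof -
      have y: "x @ [j] \<in> tree_V N" using x j unfolding tree_V_def by auto
      have "tree_laplacian N v (x @ [j]) = mu * v (x @ [j])" by (rule eig)
      then have "of_nat N * v (x @ [j]) - r * s * v (x @ [j]) + (v (x @ [j]) - v x) = mu * v (x @ [j])"
        unfolding lap_eq[OF y] using child[OF y] by simp
      then have "(of_nat N + 1 - mu - r * s) * v (x @ [j]) = v x" by (simp add: algebra_simps)
      then have "(s / r) * v (x @ [j]) = v x" unfolding lam using r(1) by (simp add: field_simps)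
      then show ?thesis using r(1) s0 by (simp add: field_simps)
    qed
    have root: "v [] = 0"
    proof -
      have "tree_laplacian N v [] = mu * v []" by (rule eig)
      then have "of_nat N * v [] - r * s * v [] = mu * v []"
        unfolding lap_eq[OF tree_V_Nil] using child[OF tree_V_Nil] by simp
      then have "(of_nat N + 1 - mu - r * s - 1) * v [] = 0" by (simp add: algebra_simps)
      then have "(s / r - 1) * v [] = 0" unfolding lam using r(1) by (simp add: field_simps)
      moreover have "s / r \<noteq> 1"
      proof
        assume "s / r = 1"
        then have "norm s = norm r" using r(1) by (simp add: field_simps)
        then show False using s1 rl by simp
      qed
      ultimately show ?thesis by auto
    qed
    have "x \<in> tree_V N \<Longrightarrow> v x = 0" for x
    proof (induction x rule: rev_induct)
      case Nil then show ?case using root by simp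
    next
      case (snoc j x)
      then show ?case using step[of x j] by simp
    qed
    then show ?thesis using l2_zero_out[OF v] by auto
  qed
qed



definition rad :: "nat \<Rightarrow> (nat \<Rightarrow> complex) \<Rightarrow> nat list \<Rightarrow> complex" where
  "rad N \<phi> x = (if x \<in> tree_V N then \<phi> (length x) else 0)"

lemma ball_eq: "{y \<in> tree_V N. length y < M} = (\<Union>n<M. Tw N n)"
  unfolding Tw_def tree_V_def by auto

lemma ball_finite: "finite {y \<in> tree_V N. length y < M}"
  unfolding ball_eq by simp

lemma rad_sum:
  "(\<Sum>y\<in>{y \<in> tree_V N. length y < M}. (norm (rad N \<phi> y))\<^sup>2) = (\<Sum>n<M. real N ^ n * (norm (\<phi> n))\<^sup>2)"
proof -
  have "(\<Sum>y\<in>{y \<in> tree_V N. length y < M}. (norm (rad N \<phi> y))\<^sup>2)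
      = (\<Sum>n<M. \<Sum>y\<in>Tw N n. (norm (rad N \<phi> y))\<^sup>2)"
    unfolding ball_eq by (rule sum.UNION_disjoint) (simp_all, auto simp: Tw_def)
  also have "\<dots> = (\<Sum>n<M. real N ^ n * (norm (\<phi> n))\<^sup>2)"
  proof (rule sum.cong[OF refl])
    fix n
    have "(\<Sum>y\<in>Tw N n. (norm (rad N \<phi> y))\<^sup>2) = (\<Sum>y\<in>Tw N n. (norm (\<phi> n))\<^sup>2)"
      by (rule sum.cong) (auto simp: rad_def Tw_def tree_V_def)
    then show "(\<Sum>y\<in>Tw N n. (norm (rad N \<phi> y))\<^sup>2) = real N ^ n * (norm (\<phi> n))\<^sup>2"
      by (simp add: Tw_card)
  qed
  finally show ?thesis .
qed

lemma rad_l2: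
  assumes "\<And>n. n \<ge> M \<Longrightarrow> \<phi> n = 0"
  shows "rad N \<phi> \<in> l2 N" "n2 N (rad N \<phi>) = (\<Sum>n<M. real N ^ n * (norm (\<phi> n))\<^sup>2)"
proof -
  let ?B = "{y \<in> tree_V N. length y < M}"
  let ?h = "\<lambda>y. (norm (rad N \<phi> y))\<^sup>2"
  have z: "?h y = 0" if "y \<notin> ?B" for y using that assms by (auto simp: rad_def)
  have le: "(\<Sum>y\<in>F. ?h y) \<le> (\<Sum>n<M. real N ^ n * (norm (\<phi> n))\<^sup>2)" if "finite F" for F
  proof -
    have "(\<Sum>y\<in>F. ?h y) \<le> (\<Sum>y\<in>F \<union> ?B. ?h y)"
      using that ball_finite by (intro sum_mono2) auto
    also have "\<dots> = (\<Sum>y\<in>?B. ?h y)"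
      using that ball_finite z by (intro sum.mono_neutral_right) auto
    finally show ?thesis unfolding rad_sum .
  qed
  have out: "\<And>x. x \<notin> tree_V N \<Longrightarrow> rad N \<phi> x = 0" by (simp add: rad_def)
  have le': "\<And>F. finite F \<Longrightarrow> F \<subseteq> tree_V N \<Longrightarrow> (\<Sum>y\<in>F. ?h y) \<le> (\<Sum>n<M. real N ^ n * (norm (\<phi> n))\<^sup>2)"
    using le by blast
  note li = l2_intro[of N "rad N \<phi>", OF out le']
  have "rad N \<phi> \<in> l2 N" "n2 N (rad N \<phi>) \<le> (\<Sum>n<M. real N ^ n * (norm (\<phi> n))\<^sup>2)"
    using li by auto
  then show "rad N \<phi> \<in> l2 N" by simp
  have "(\<Sum>y\<in>?B. ?h y) \<le> n2 N (rad N \<phi>)"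
    by (rule l2_sum_le[OF \<open>rad N \<phi> \<in> l2 N\<close> ball_finite]) auto
  then show "n2 N (rad N \<phi>) = (\<Sum>n<M. real N ^ n * (norm (\<phi> n))\<^sup>2)"
    using \<open>n2 N (rad N \<phi>) \<le> _\<close> unfolding rad_sum by simp
qed

lemma lap_rad:
  "tree_laplacian N (rad N \<phi>) x = rad N (\<lambda>n. of_nat N * \<phi> n - of_nat N * \<phi> (Suc n)
      + (if n = 0 then 0 else \<phi> n - \<phi> (n - 1))) x"
proof (cases "x \<in> tree_V N")
  case True
  have bl: "butlast x \<in> tree_V N" using True unfolding tree_V_def by (auto dest: in_set_butlastD)
  have ch: "(\<Sum>i\<in>{1..N}. rad N \<phi> (x @ [i])) = of_nat N * \<phi> (Suc (length x))"
  proof -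
    have "(\<Sum>i\<in>{1..N}. rad N \<phi> (x @ [i])) = (\<Sum>i\<in>{1..N}. \<phi> (Suc (length x)))"
      using True by (intro sum.cong refl) (simp add: rad_def)
    then show ?thesis by simp
  qed
  have rx: "rad N \<phi> x = \<phi> (length x)" using True by (simp add: rad_def)
  have rb: "rad N \<phi> (butlast x) = \<phi> (length x - 1)" using bl by (simp add: rad_def)
  show ?thesis unfolding lap_eq[OF True] ch rx rb
    using True by (simp add: rad_def)
next
  case False
  then show ?thesis by (simp add: tree_laplacian_def rad_def)
qed



lemma weyl_bound:
  fixes s \<omega> mu :: complex
  assumes N: "N \<ge> 1" and sN: "s\<^sup>2 = of_nat N" and sn: "norm s = sqrt (real N)"
    and w1: "norm \<omega> = 1" and lam: "of_nat N + 1 - mu = s * (\<omega> + inverse \<omega>)"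
    and M: "M \<ge> 2"
  defines "\<phi> \<equiv> \<lambda>n. if n < M then (\<omega> / s) ^ n else 0"
  defines "\<psi> \<equiv> \<lambda>n. of_nat N * \<phi> n - of_nat N * \<phi> (Suc n) + (if n = 0 then 0 else \<phi> n - \<phi> (n - 1)) - mu * \<phi> n"
  shows "real N ^ n * (norm (\<psi> n))\<^sup>2 \<le> (if n = 0 then (norm (of_nat N - of_nat N * (\<omega> / s) - mu))\<^sup>2 else 0)
           + (if n = M - 1 then real N else 0) + (if n = M then real N else 0)"
proof -
  have s0: "s \<noteq> 0" using sN N by auto
  have w0: "\<omega> \<noteq> 0" using w1 by auto
  define g where "g n = (\<omega> / s) ^ n" for n
  have gn: "real N ^ n * (norm (g m))\<^sup>2 = real N ^ n / real N ^ m" for n m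
  proof -
    have "(norm (\<omega> / s))\<^sup>2 = 1 / real N" using w1 N by (simp add: norm_divide sn power_divide)
    then have "(norm (g m))\<^sup>2 = (1 / real N) ^ m" unfolding g_def norm_power
      by (metis power_mult power_mult_distrib[symmetric] power2_eq_square mult.commute power_even_eq)
    then show ?thesis by (simp add: power_one_over)
  qed
  have key: "(of_nat N + 1 - mu) * g (Suc n) - of_nat N * g (Suc (Suc n)) - g n = 0" for n
  proof -
    have "(of_nat N + 1 - mu) * g (Suc n) - of_nat N * g (Suc (Suc n)) - g n
        = g n * ((\<omega> + inverse \<omega>) * \<omega> - \<omega> * \<omega> - 1)"
      unfolding lam g_def unfolding sN[symmetric] using s0 w0 by (simp add: field_simps power2_eq_square)
    also have "\<dots> = 0" using w0 by (simp add: field_simps)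
    finally show ?thesis .
  qed
  have psi_pos: "\<psi> (Suc n) = (of_nat N + 1 - mu) * \<phi> (Suc n) - of_nat N * \<phi> (Suc (Suc n)) - \<phi> n" for n
    unfolding \<psi>_def by (simp add: algebra_simps)
  show ?thesis
  proof (cases n)
    case 0
    have "\<psi> 0 = of_nat N - of_nat N * (\<omega> / s) - mu" unfolding \<psi>_def \<phi>_def using M by simp
    then show ?thesis using 0 M by simp
  next
    case (Suc m)
    consider "Suc (Suc m) < M" | "Suc (Suc m) = M" | "Suc m = M" | "Suc m > M" by linarith
    then show ?thesis
    proof cases
      case 1
      then have "\<psi> n = 0" unfolding Suc psi_pos using key[of m] by (simp add: \<phi>_def g_def)
      then show ?thesis by simp
    next
      case 2
      then have "\<psi> n = of_nat N * g (Suc (Suc m))" unfolding Suc psi_pos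
        using key[of m] by (simp add: \<phi>_def g_def algebra_simps)
      then have "real N ^ n * (norm (\<psi> n))\<^sup>2 = real N ^ 2 * (real N ^ n * (norm (g (Suc (Suc m))))\<^sup>2)"
        by (simp add: norm_mult power_mult_distrib)
      also have "\<dots> = real N" unfolding gn Suc using N by (simp add: field_simps power2_eq_square)
      finally have eq: "real N ^ n * (norm (\<psi> n))\<^sup>2 = real N" .
      show ?thesis using 2 Suc by (subst eq) simp
    next
      case 3
      then have "\<psi> n = - g m" unfolding Suc psi_pos by (simp add: \<phi>_def g_def)
      then have "real N ^ n * (norm (\<psi> n))\<^sup>2 = real N ^ n * (norm (g m))\<^sup>2" by simp
      also have "\<dots> = real N" unfolding gn Suc using N by simp
      finally have eq: "real N ^ n * (norm (\<psi> n))\<^sup>2 = real N" .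
      show ?thesis using 3 Suc M by (subst eq) simp
    next
      case 4
      then have "\<psi> n = 0" unfolding Suc psi_pos by (simp add: \<phi>_def)
      then show ?thesis using 4 Suc by simp
    qed
  qed
qed


lemma in_spec:
  assumes N: "N \<ge> 1" and t: "real N + 1 - 2 * sqrt (real N) \<le> t" "t \<le> real N + 1 + 2 * sqrt (real N)"
  shows "complex_of_real t \<in> tree_spectrum N"
proof -
  define mu where "mu = complex_of_real t"
  define s where "s = complex_of_real (sqrt (real N))"
  have sN: "s\<^sup>2 = of_nat N" unfolding s_def
    by (metis of_real_of_nat_eq of_real_power of_nat_0_le_iff real_sqrt_pow2)
  have sn: "norm s = sqrt (real N)" unfolding s_def by simp
  have sq0: "sqrt (real N) > 0" using N by simp
  define l where "l = (real N + 1 - t) / sqrt (real N)"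
  have "\<bar>real N + 1 - t\<bar> \<le> 2 * sqrt (real N)" using t by linarith
  then have l2: "\<bar>l\<bar> \<le> 2" unfolding l_def using sq0 by (simp add: abs_div divide_le_eq)
  then have "\<bar>l\<bar>\<^sup>2 \<le> 2\<^sup>2" by (intro power_mono) auto
  then have l4: "l\<^sup>2 / 4 \<le> 1" by simp
  define \<omega> where "\<omega> = Complex (l / 2) (sqrt (1 - l\<^sup>2 / 4))"
  have w1: "norm \<omega> = 1" unfolding \<omega>_def complex_norm using l4
    by (simp add: power_divide)
  have "\<omega> * cnj \<omega> = 1" using complex_norm_square[of \<omega>] w1 by simp
  then have inv: "inverse \<omega> = cnj \<omega>" by (rule inverse_unique)
  have wl: "\<omega> + inverse \<omega> = complex_of_real l" unfolding inv complex_add_cnj by (simp add: \<omega>_def)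
  have lam: "of_nat N + 1 - mu = s * (\<omega> + inverse \<omega>)"
  proof -
    have "sqrt (real N) * l = real N + 1 - t" unfolding l_def using sq0 by simp
    then have "s * complex_of_real l = complex_of_real (real N + 1 - t)"
      unfolding s_def by (metis of_real_mult)
    then show ?thesis unfolding wl mu_def by simp
  qed
  define K where "K = (norm (of_nat N - of_nat N * (\<omega> / s) - mu))\<^sup>2 + 2 * real N"
  have K0: "K \<ge> 0" unfolding K_def by simp
  have False if S1: "\<forall>v\<in>l2 N. S v \<in> l2 N" and SC: "\<forall>v\<in>l2 N. l2_norm N (S v) \<le> C * l2_norm N v"
    and S2: "\<forall>v\<in>l2 N. S (\<lambda>x. tree_laplacian N v x - mu * v x) = v" for S C
  proof -
    define M where "M = nat \<lceil>C\<^sup>2 * K\<rceil> + 2"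
    have M2: "M \<ge> 2" unfolding M_def by simp
    have MK: "real M > C\<^sup>2 * K" unfolding M_def by linarith
    define \<phi> where "\<phi> = (\<lambda>n. if n < M then (\<omega> / s) ^ n else 0)"
    define \<psi> where "\<psi> = (\<lambda>n. of_nat N * \<phi> n - of_nat N * \<phi> (Suc n) + (if n = 0 then 0 else \<phi> n - \<phi> (n - 1)) - mu * \<phi> n)"
    have wb: "real N ^ n * (norm (\<psi> n))\<^sup>2 \<le> (if n = 0 then (norm (of_nat N - of_nat N * (\<omega> / s) - mu))\<^sup>2 else 0)
           + (if n = M - 1 then real N else 0) + (if n = M then real N else 0)" for n
      using weyl_bound[OF N sN sn w1 lam M2, of n] unfolding \<phi>_def \<psi>_def by simp
    have fz: "\<phi> n = 0" if "n \<ge> M" for n using that unfolding \<phi>_def by simp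
    have pz: "\<psi> n = 0" if "n \<ge> Suc M" for n using that unfolding \<psi>_def \<phi>_def by simp
    have fl2: "rad N \<phi> \<in> l2 N" "n2 N (rad N \<phi>) = (\<Sum>n<M. real N ^ n * (norm (\<phi> n))\<^sup>2)"
      using rad_l2[of M \<phi> N] fz by auto
    have pl2: "rad N \<psi> \<in> l2 N" "n2 N (rad N \<psi>) = (\<Sum>n<Suc M. real N ^ n * (norm (\<psi> n))\<^sup>2)"
      using rad_l2[of "Suc M" \<psi> N] pz by auto
    have nf: "n2 N (rad N \<phi>) = real M"
    proof -
      have "real N ^ n * (norm (\<phi> n))\<^sup>2 = 1" if "n < M" for n
      proof -
        have "(norm (\<omega> / s))\<^sup>2 = 1 / real N" using w1 N by (simp add: norm_divide sn power_divide)
        have "(norm (\<phi> n))\<^sup>2 = ((norm (\<omega> / s))\<^sup>2) ^ n" using that unfolding \<phi>_def norm_power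
          by (simp add: norm_power power_mult[symmetric] mult.commute[of n 2])
        then have "(norm (\<phi> n))\<^sup>2 = (1 / real N) ^ n" using \<open>(norm (\<omega> / s))\<^sup>2 = 1 / real N\<close> by simp
        then show ?thesis using N by (simp add: power_one_over)
      qed
      then have "(\<Sum>n<M. real N ^ n * (norm (\<phi> n))\<^sup>2) = (\<Sum>n<M. 1)" by (intro sum.cong) auto
      then show ?thesis using fl2(2) by simp
    qed
    have np: "n2 N (rad N \<psi>) \<le> K"
    proof -
      have "n2 N (rad N \<psi>) = (\<Sum>n<Suc M. real N ^ n * (norm (\<psi> n))\<^sup>2)" by (rule pl2(2))
      also have "\<dots> \<le> (\<Sum>n<Suc M. (if n = 0 then (norm (of_nat N - of_nat N * (\<omega> / s) - mu))\<^sup>2 else 0)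
           + (if n = M - 1 then real N else 0) + (if n = M then real N else 0))"
        by (rule sum_mono) (rule wb)
      also have "\<dots> = K" unfolding K_def using M2 by (simp add: sum.distrib)
      finally show ?thesis .
    qed
    have res: "(\<lambda>x. tree_laplacian N (rad N \<phi>) x - mu * rad N \<phi> x) = rad N \<psi>"
      unfolding lap_rad by (auto simp: rad_def \<psi>_def)
    have "S (\<lambda>x. tree_laplacian N (rad N \<phi>) x - mu * rad N \<phi> x) = rad N \<phi>" using S2 fl2(1) by blast
    then have "S (rad N \<psi>) = rad N \<phi>" unfolding res .
    then have "l2_norm N (rad N \<phi>) \<le> C * l2_norm N (rad N \<psi>)" using SC pl2(1) by auto
    then have "sqrt (real M) \<le> C * sqrt (n2 N (rad N \<psi>))" unfolding l2_norm_n2 nf .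
    also have "\<dots> \<le> \<bar>C\<bar> * sqrt K"
      using np n2_nonneg[of N "rad N \<psi>"] by (intro order_trans[OF abs_ge_self[of "C * _"]])
        (auto simp: abs_mult intro!: mult_left_mono)
    finally have "sqrt (real M) \<le> \<bar>C\<bar> * sqrt K" .
    then have "(sqrt (real M))\<^sup>2 \<le> (\<bar>C\<bar> * sqrt K)\<^sup>2" by (intro power_mono) auto
    then have "real M \<le> C\<^sup>2 * K" using K0 by (simp add: power_mult_distrib)
    then show False using MK by simp
  qed
  then show ?thesis unfolding tree_spectrum_def mu_def[symmetric] by blast
qed



lemma cs_sq_le:
  assumes w: "w \<in> l2 N" and x: "x \<in> tree_V N"
  shows "(norm (cs N w x k))\<^sup>2 \<le> real N ^ k * n2 N w"
proof -
  have "(\<Sum>t\<in>Tw N k. (norm (w (x @ t)))\<^sup>2) \<le> (\<Sum>y\<in>Tw N (length x + k). (norm (w y))\<^sup>2)"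
    by (rule sub_level[OF x])
  also have "\<dots> \<le> n2 N w" by (rule l2_sum_le[OF w]) (auto intro: Tw_sub)
  finally have "(\<Sum>t\<in>Tw N k. (norm (w (x @ t)))\<^sup>2) \<le> n2 N w" .
  then have "real N ^ k * (\<Sum>t\<in>Tw N k. (norm (w (x @ t)))\<^sup>2) \<le> real N ^ k * n2 N w"
    by (intro mult_left_mono) auto
  then show ?thesis using cs_bound[of N w x k] by linarith
qed

lemma Y_term_le:
  assumes w: "w \<in> l2 N" and x: "x \<in> tree_V N"
  shows "norm (q ^ k * cs N w x k) \<le> (norm q * sqrt (real N)) ^ k * sqrt (n2 N w)"
proof -
  have "norm (cs N w x k) \<le> sqrt (real N ^ k * n2 N w)"
    by (rule real_le_rsqrt) (rule cs_sq_le[OF w x])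
  also have "\<dots> = sqrt (real N) ^ k * sqrt (n2 N w)" by (simp add: real_sqrt_mult real_sqrt_power)
  finally have "norm (q ^ k) * norm (cs N w x k) \<le> norm q ^ k * (sqrt (real N) ^ k * sqrt (n2 N w))"
    by (simp add: norm_power mult_left_mono)
  then show ?thesis by (simp add: norm_mult power_mult_distrib mult.assoc)
qed

lemma Y_summable:
  assumes w: "w \<in> l2 N" and x: "x \<in> tree_V N" and a: "norm q * sqrt (real N) < 1"
  shows "summable (\<lambda>k. norm (q ^ k * cs N w x k))"
proof (rule summable_comparison_test)
  show "\<exists>M. \<forall>k\<ge>M. norm (norm (q ^ k * cs N w x k)) \<le> (norm q * sqrt (real N)) ^ k * sqrt (n2 N w)"
    using Y_term_le[OF w x] by auto
  show "summable (\<lambda>k. (norm q * sqrt (real N)) ^ k * sqrt (n2 N w))"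
    using a by (intro summable_mult2 summable_geometric) auto
qed

definition Yop :: "nat \<Rightarrow> complex \<Rightarrow> (nat list \<Rightarrow> complex) \<Rightarrow> nat list \<Rightarrow> complex" where
  "Yop N q w x = (if x \<in> tree_V N then (\<Sum>k. q ^ k * cs N w x k) else 0)"

lemma cs_Suc_front: "cs N w x (Suc k) = (\<Sum>i\<in>{1..N}. cs N w (x @ [i]) k)"
  unfolding cs_def by (subst sum_Tw_Suc_front) simp

lemma Y_summable_shift:
  assumes w: "w \<in> l2 N" and x: "x \<in> tree_V N" and a: "norm q * sqrt (real N) < 1"
  shows "summable (\<lambda>k. q ^ k * cs N w x (Suc k))"
proof (rule summable_norm_cancel, rule summable_comparison_test)
  have "norm (q ^ k * cs N w x (Suc k)) \<le> sqrt (real N) * ((norm q * sqrt (real N)) ^ k * sqrt (n2 N w))" for k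
  proof -
    have "norm (cs N w x (Suc k)) \<le> sqrt (real N ^ Suc k * n2 N w)"
      by (rule real_le_rsqrt) (rule cs_sq_le[OF w x])
    also have "\<dots> = sqrt (real N) * (sqrt (real N) ^ k * sqrt (n2 N w))"
      by (simp add: real_sqrt_mult real_sqrt_power)
    finally have "norm (q ^ k) * norm (cs N w x (Suc k)) \<le> norm q ^ k * (sqrt (real N) * (sqrt (real N) ^ k * sqrt (n2 N w)))"
      by (simp add: norm_power mult_left_mono)
    then show ?thesis by (simp add: norm_mult power_mult_distrib algebra_simps)
  qed
  then show "\<exists>M. \<forall>k\<ge>M. norm (norm (q ^ k * cs N w x (Suc k))) \<le> sqrt (real N) * ((norm q * sqrt (real N)) ^ k * sqrt (n2 N w))"
    by auto
  show "summable (\<lambda>k. sqrt (real N) * ((norm q * sqrt (real N)) ^ k * sqrt (n2 N w)))"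
    using a by (intro summable_mult summable_mult2 summable_geometric) auto
qed

lemma Y_eq:
  assumes w: "w \<in> l2 N" and x: "x \<in> tree_V N" and a: "norm q * sqrt (real N) < 1"
  shows "Yop N q w x - q * (\<Sum>i\<in>{1..N}. Yop N q w (x @ [i])) = w x"
proof -
  have sm: "summable (\<lambda>k. q ^ k * cs N w y k)" if "y \<in> tree_V N" for y
    using Y_summable[OF w that a] by (rule summable_norm_cancel)
  have xi: "x @ [i] \<in> tree_V N" if "i \<in> {1..N}" for i using x that unfolding tree_V_def by auto
  have "(\<Sum>i\<in>{1..N}. Yop N q w (x @ [i])) = (\<Sum>i\<in>{1..N}. \<Sum>k. q ^ k * cs N w (x @ [i]) k)"
    using xi by (intro sum.cong) (auto simp: Yop_def)
  also have "\<dots> = (\<Sum>k. \<Sum>i\<in>{1..N}. q ^ k * cs N w (x @ [i]) k)"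
    by (rule suminf_sum[symmetric]) (rule sm[OF xi])
  also have "\<dots> = (\<Sum>k. q ^ k * cs N w x (Suc k))"
    by (simp only: cs_Suc_front sum_distrib_left)
  finally have e1: "(\<Sum>i\<in>{1..N}. Yop N q w (x @ [i])) = (\<Sum>k. q ^ k * cs N w x (Suc k))" .
  have e2: "(\<Sum>k. q ^ Suc k * cs N w x (Suc k)) = (\<Sum>k. q ^ k * cs N w x k) - cs N w x 0"
    using suminf_split_head[OF sm[OF x]] by simp
  have e3: "(\<Sum>k. q ^ Suc k * cs N w x (Suc k)) = q * (\<Sum>k. q ^ k * cs N w x (Suc k))"
    using suminf_mult[OF Y_summable_shift[OF w x a], of q] by (simp add: mult.assoc)
  have e4: "Yop N q w x = (\<Sum>k. q ^ k * cs N w x k)" using x by (simp add: Yop_def)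
  have e5: "cs N w x 0 = w x" by (simp add: cs_def)
  show ?thesis unfolding e1 e4 e3[symmetric] e2 e5 by simp
qed



lemma sum_levels_le:
  assumes w: "w \<in> l2 N" and F: "finite F" "F \<subseteq> tree_V N"
  shows "(\<Sum>x\<in>F. \<Sum>t\<in>Tw N k. (norm (w (x @ t)))\<^sup>2) \<le> n2 N w"
proof -
  have inj: "inj_on (\<lambda>p. fst p @ snd p) (F \<times> Tw N k)"
    by (auto simp: inj_on_def Tw_def)
  have "(\<Sum>x\<in>F. \<Sum>t\<in>Tw N k. (norm (w (x @ t)))\<^sup>2) = (\<Sum>p\<in>F \<times> Tw N k. (norm (w (fst p @ snd p)))\<^sup>2)"
    unfolding sum.cartesian_product by (simp add: split_def)
  also have "\<dots> = (\<Sum>y\<in>(\<lambda>p. fst p @ snd p) ` (F \<times> Tw N k). (norm (w y))\<^sup>2)"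
    using sum.reindex[OF inj, of "\<lambda>y. (norm (w y))\<^sup>2"] by simp
  also have "\<dots> \<le> n2 N w"
    by (rule l2_sum_le[OF w]) (use F in \<open>auto dest: Tw_sub\<close>)
  finally show ?thesis .
qed

lemma geom_partial_le:
  fixes a :: real assumes "0 \<le> a" "a < 1"
  shows "(\<Sum>k<K. a ^ k) \<le> 1 / (1 - a)"
proof -
  have "(\<Sum>k<K. a ^ k) \<le> (\<Sum>k. a ^ k)"
    using assms by (intro sum_le_suminf summable_geometric) auto
  then show ?thesis using suminf_geometric[of a] assms by simp
qed

lemma Y_l2:
  assumes w: "w \<in> l2 N" and a: "norm q * sqrt (real N) < 1"
  shows "Yop N q w \<in> l2 N" "n2 N (Yop N q w) \<le> n2 N w / (1 - norm q * sqrt (real N))\<^sup>2"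
proof -
  define a where "a = norm q * sqrt (real N)"
  have a0: "0 \<le> a" "a < 1" using a unfolding a_def by auto
  define e where "e x k = (\<Sum>t\<in>Tw N k. (norm (w (x @ t)))\<^sup>2)" for x k
  have e0: "e x k \<ge> 0" for x k unfolding e_def by (auto intro: sum_nonneg)
  have tb: "norm (q ^ k * cs N w x k) \<le> a ^ k * sqrt (e x k)" for x k
  proof -
    have "norm (cs N w x k) \<le> sqrt (real N ^ k * e x k)"
      by (rule real_le_rsqrt) (use cs_bound[of N w x k] in \<open>simp add: e_def\<close>)
    also have "\<dots> = sqrt (real N) ^ k * sqrt (e x k)" by (simp add: real_sqrt_mult real_sqrt_power)
    finally have "norm (q ^ k) * norm (cs N w x k) \<le> norm q ^ k * (sqrt (real N) ^ k * sqrt (e x k))"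
      by (simp add: norm_power mult_left_mono)
    then show ?thesis by (simp add: norm_mult power_mult_distrib mult.assoc a_def)
  qed
  define Q where "Q x = (\<Sum>k. norm (q ^ k * cs N w x k))" for x
  define P where "P K x = (\<Sum>k<K. norm (q ^ k * cs N w x k))" for K x
  have bound: "(\<Sum>x\<in>F. (Q x)\<^sup>2) \<le> n2 N w / (1 - a)\<^sup>2" if F: "finite F" "F \<subseteq> tree_V N" for F
  proof -
    have PK: "(\<Sum>x\<in>F. (P K x)\<^sup>2) \<le> n2 N w / (1 - a)\<^sup>2" for K
    proof -
      have p1: "(P K x)\<^sup>2 \<le> 1 / (1 - a) * (\<Sum>k<K. a ^ k * e x k)" for x
      proof -
        have "P K x \<le> (\<Sum>k<K. a ^ k * sqrt (e x k))" unfolding P_def by (intro sum_mono tb)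
        moreover have "0 \<le> P K x" unfolding P_def by (auto intro: sum_nonneg)
        ultimately have "(P K x)\<^sup>2 \<le> (\<Sum>k<K. a ^ k * sqrt (e x k))\<^sup>2" by (intro power_mono) auto
        also have "\<dots> \<le> (\<Sum>k<K. a ^ k) * (\<Sum>k<K. a ^ k * (sqrt (e x k))\<^sup>2)"
          using a0 by (intro CS_weighted) auto
        also have "\<dots> = (\<Sum>k<K. a ^ k) * (\<Sum>k<K. a ^ k * e x k)" using e0 by simp
        also have "\<dots> \<le> 1 / (1 - a) * (\<Sum>k<K. a ^ k * e x k)"
          using a0 e0 by (intro mult_right_mono geom_partial_le sum_nonneg) auto
        finally show ?thesis .
      qed
      have "(\<Sum>x\<in>F. (P K x)\<^sup>2) \<le> (\<Sum>x\<in>F. 1 / (1 - a) * (\<Sum>k<K. a ^ k * e x k))"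
        by (intro sum_mono p1)
      also have "\<dots> = 1 / (1 - a) * (\<Sum>k<K. a ^ k * (\<Sum>x\<in>F. e x k))"
        by (simp add: sum_distrib_left sum.swap[of _ F])
      also have "\<dots> \<le> 1 / (1 - a) * (\<Sum>k<K. a ^ k * n2 N w)"
        using a0 unfolding e_def
        by (intro mult_left_mono sum_mono sum_levels_le[OF w F]) auto
      also have "\<dots> = 1 / (1 - a) * ((\<Sum>k<K. a ^ k) * n2 N w)" by (simp add: sum_distrib_right)
      also have "\<dots> \<le> 1 / (1 - a) * (1 / (1 - a) * n2 N w)"
        using a0 n2_nonneg[of N w] by (intro mult_left_mono mult_right_mono geom_partial_le) auto
      also have "\<dots> = n2 N w / (1 - a)\<^sup>2" by (simp add: power2_eq_square)
      finally show ?thesis .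
    qed
    have lim: "(\<lambda>K. \<Sum>x\<in>F. (P K x)\<^sup>2) \<longlonglongrightarrow> (\<Sum>x\<in>F. (Q x)\<^sup>2)"
    proof (intro tendsto_sum tendsto_power)
      fix x assume "x \<in> F"
      then have "x \<in> tree_V N" using F by auto
      then show "(\<lambda>K. P K x) \<longlonglongrightarrow> Q x" unfolding P_def Q_def
        by (intro summable_LIMSEQ Y_summable[OF w _ a])
    qed
    show ?thesis by (rule LIMSEQ_le_const2[OF lim]) (use PK in auto)
  qed
  have YQ: "(norm (Yop N q w x))\<^sup>2 \<le> (Q x)\<^sup>2" if "x \<in> tree_V N" for x
  proof -
    have "norm (Yop N q w x) \<le> Q x" unfolding Yop_def Q_def using that
      by (simp add: summable_norm Y_summable[OF w that a])
    then show ?thesis by (intro power_mono) auto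
  qed
  have main: "(\<Sum>x\<in>F. (norm (Yop N q w x))\<^sup>2) \<le> n2 N w / (1 - a)\<^sup>2"
    if "finite F" "F \<subseteq> tree_V N" for F
    using order_trans[OF sum_mono[OF YQ] bound[OF that]] that by auto
  show "Yop N q w \<in> l2 N" by (rule l2_intro(1)[OF _ main]) (auto simp: Yop_def)
  show "n2 N (Yop N q w) \<le> n2 N w / (1 - norm q * sqrt (real N))\<^sup>2"
    unfolding a_def[symmetric] by (rule l2_intro(2)[OF _ main]) (auto simp: Yop_def)
qed



definition Xop :: "nat \<Rightarrow> complex \<Rightarrow> (nat list \<Rightarrow> complex) \<Rightarrow> nat list \<Rightarrow> complex" where
  "Xop N q u x = (if x \<in> tree_V N then (\<Sum>k\<le>length x. q ^ k * u (take (length x - k) x)) else 0)"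

lemma X_Nil: "Xop N q u [] = u []" by (simp add: Xop_def)

lemma X_snoc:
  assumes "x @ [i] \<in> tree_V N"
  shows "Xop N q u (x @ [i]) = u (x @ [i]) + q * Xop N q u x"
proof -
  have x: "x \<in> tree_V N" using assms by simp
  have "Xop N q u (x @ [i]) = (\<Sum>k\<le>Suc (length x). q ^ k * u (take (Suc (length x) - k) (x @ [i])))"
    using assms by (simp add: Xop_def)
  also have "\<dots> = u (x @ [i]) + (\<Sum>k\<le>length x. q ^ Suc k * u (take (length x - k) (x @ [i])))"
    by (subst sum.atMost_Suc_shift) simp
  also have "(\<Sum>k\<le>length x. q ^ Suc k * u (take (length x - k) (x @ [i])))
      = q * (\<Sum>k\<le>length x. q ^ k * u (take (length x - k) x))"
    by (simp add: sum_distrib_left mult.assoc)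
  finally show ?thesis using x by (simp add: Xop_def)
qed

lemma ball_split:
  "{x \<in> tree_V N. length x < M \<and> k \<le> length x}
     = (\<lambda>p. fst p @ snd p) ` ({y \<in> tree_V N. length y < M - k} \<times> Tw N k)"
proof (rule set_eqI, rule iffI)
  fix x assume x: "x \<in> {x \<in> tree_V N. length x < M \<and> k \<le> length x}"
  have "x = take (length x - k) x @ drop (length x - k) x" by simp
  moreover have "take (length x - k) x \<in> {y \<in> tree_V N. length y < M - k}"
    using x by (auto simp: tree_V_def dest: in_set_takeD)
  moreover have "drop (length x - k) x \<in> Tw N k"
    using x by (auto simp: tree_V_def Tw_def dest: in_set_dropD)
  ultimately show "x \<in> (\<lambda>p. fst p @ snd p) ` ({y \<in> tree_V N. length y < M - k} \<times> Tw N k)"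
    by (intro image_eqI[where x="(take (length x - k) x, drop (length x - k) x)"]) auto
qed (auto simp: Tw_def tree_V_def subset_iff)

lemma X_level_sum:
  assumes u: "u \<in> l2 N" and N: "N \<ge> 1"
  shows "(\<Sum>x\<in>{x \<in> tree_V N. length x < M \<and> k \<le> length x}. (norm (u (take (length x - k) x)))\<^sup>2 / real N ^ k)
          \<le> n2 N u"
proof -
  let ?B = "{y \<in> tree_V N. length y < M - k}"
  have inj: "inj_on (\<lambda>p. fst p @ snd p) (?B \<times> Tw N k)" by (auto simp: inj_on_def Tw_def)
  have "(\<Sum>x\<in>{x \<in> tree_V N. length x < M \<and> k \<le> length x}. (norm (u (take (length x - k) x)))\<^sup>2 / real N ^ k)
      = (\<Sum>p\<in>?B \<times> Tw N k. (norm (u (take (length (fst p @ snd p) - k) (fst p @ snd p))))\<^sup>2 / real N ^ k)"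
    unfolding ball_split by (subst sum.reindex[OF inj]) simp
  also have "\<dots> = (\<Sum>p\<in>?B \<times> Tw N k. (norm (u (fst p)))\<^sup>2 / real N ^ k)"
    by (intro sum.cong refl) (auto simp: Tw_def)
  also have "\<dots> = (\<Sum>y\<in>?B. \<Sum>t\<in>Tw N k. (norm (u y))\<^sup>2 / real N ^ k)"
    unfolding sum.cartesian_product by (simp add: split_def)
  also have "\<dots> = (\<Sum>y\<in>?B. (norm (u y))\<^sup>2)"
  proof (intro sum.cong refl)
    fix y
    show "(\<Sum>t\<in>Tw N k. (norm (u y))\<^sup>2 / real N ^ k) = (norm (u y))\<^sup>2"
      using N by (simp add: Tw_card)
  qed
  also have "\<dots> \<le> n2 N u" by (rule l2_sum_le[OF u]) (auto simp: ball_finite)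
  finally show ?thesis .
qed

lemma X_l2:
  assumes u: "u \<in> l2 N" and N: "N \<ge> 1" and a: "norm q * sqrt (real N) < 1"
  shows "Xop N q u \<in> l2 N" "n2 N (Xop N q u) \<le> n2 N u / (1 - norm q * sqrt (real N))\<^sup>2"
proof -
  define a where "a = norm q * sqrt (real N)"
  have a0: "0 \<le> a" "a < 1" using a unfolding a_def by auto
  have sN: "sqrt (real N) > 0" using N by simp
  define b where "b x k = (norm (u (take (length x - k) x)))\<^sup>2 / real N ^ k" for x k
  have b0: "b x k \<ge> 0" for x k unfolding b_def by simp
  have pw: "(norm (Xop N q u x))\<^sup>2 \<le> 1 / (1 - a) * (\<Sum>k\<le>length x. a ^ k * b x k)"
    if x: "x \<in> tree_V N" for x
  proof -
    have tk: "norm (q ^ k * u (take (length x - k) x)) = a ^ k * sqrt (b x k)" for k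
    proof -
      have "sqrt (b x k) = norm (u (take (length x - k) x)) / sqrt (real N) ^ k"
        unfolding b_def by (simp add: real_sqrt_divide real_sqrt_power)
      then show ?thesis using sN unfolding a_def by (simp add: norm_mult norm_power power_mult_distrib)
    qed
    have "norm (Xop N q u x) \<le> (\<Sum>k\<le>length x. norm (q ^ k * u (take (length x - k) x)))"
      using x unfolding Xop_def by (simp add: norm_sum)
    also have "\<dots> = (\<Sum>k\<le>length x. a ^ k * sqrt (b x k))" by (simp add: tk)
    finally have "(norm (Xop N q u x))\<^sup>2 \<le> (\<Sum>k\<le>length x. a ^ k * sqrt (b x k))\<^sup>2"
      by (intro power_mono) auto
    also have "\<dots> \<le> (\<Sum>k\<le>length x. a ^ k) * (\<Sum>k\<le>length x. a ^ k * (sqrt (b x k))\<^sup>2)"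
      using a0 by (intro CS_weighted) auto
    also have "\<dots> = (\<Sum>k<Suc (length x). a ^ k) * (\<Sum>k\<le>length x. a ^ k * b x k)"
      using b0 by (simp add: lessThan_Suc_atMost)
    also have "\<dots> \<le> 1 / (1 - a) * (\<Sum>k\<le>length x. a ^ k * b x k)"
      using a0 b0 by (intro mult_right_mono geom_partial_le sum_nonneg) auto
    finally show ?thesis .
  qed
  have main: "(\<Sum>x\<in>F. (norm (Xop N q u x))\<^sup>2) \<le> n2 N u / (1 - a)\<^sup>2"
    if F: "finite F" "F \<subseteq> tree_V N" for F
  proof -
    define M where "M = Suc (\<Sum>x\<in>F. length x)"
    let ?B = "{y \<in> tree_V N. length y < M}"
    have FB: "F \<subseteq> ?B"
    proof
      fix x assume "x \<in> F"
      then have "length x \<le> (\<Sum>x\<in>F. length x)" using F(1) by (intro member_le_sum) auto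
      then show "x \<in> ?B" using \<open>x \<in> F\<close> F(2) unfolding M_def by auto
    qed
    have "(\<Sum>x\<in>F. (norm (Xop N q u x))\<^sup>2) \<le> (\<Sum>x\<in>?B. (norm (Xop N q u x))\<^sup>2)"
      using FB ball_finite by (intro sum_mono2) auto
    also have "\<dots> \<le> (\<Sum>x\<in>?B. 1 / (1 - a) * (\<Sum>k\<le>length x. a ^ k * b x k))"
      by (intro sum_mono pw) auto
    also have "\<dots> = (\<Sum>x\<in>?B. 1 / (1 - a) * (\<Sum>k<M. if k \<le> length x then a ^ k * b x k else 0))"
    proof (rule sum.cong[OF refl])
      fix x assume "x \<in> ?B"
      then have "{k \<in> {..<M}. k \<le> length x} = {..length x}" by auto
      then have "(\<Sum>k\<le>length x. a ^ k * b x k) = (\<Sum>k<M. if k \<le> length x then a ^ k * b x k else 0)"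
        using sum.inter_filter[of "{..<M}" "\<lambda>k. a ^ k * b x k" "\<lambda>k. k \<le> length x"] by simp
      then show "1 / (1 - a) * (\<Sum>k\<le>length x. a ^ k * b x k) = 1 / (1 - a) * (\<Sum>k<M. if k \<le> length x then a ^ k * b x k else 0)"
        by simp
    qed
    also have "\<dots> = 1 / (1 - a) * (\<Sum>k<M. \<Sum>x\<in>?B. if k \<le> length x then a ^ k * b x k else 0)"
      by (simp add: sum_distrib_left sum.swap[of _ ?B])
    also have "\<dots> = 1 / (1 - a) * (\<Sum>k<M. a ^ k * (\<Sum>x\<in>?B. if k \<le> length x then b x k else 0))"
      by (auto simp: sum_distrib_left intro!: sum.cong)
    also have "\<dots> \<le> 1 / (1 - a) * (\<Sum>k<M. a ^ k * n2 N u)"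
    proof (rule mult_left_mono, rule sum_mono)
      fix k
      have "(\<Sum>x\<in>?B. if k \<le> length x then b x k else 0) = (\<Sum>x\<in>{x \<in> ?B. k \<le> length x}. b x k)"
        using sum.inter_filter[of ?B "\<lambda>x. b x k" "\<lambda>x. k \<le> length x"] ball_finite by simp
      also have "{x \<in> ?B. k \<le> length x} = {x \<in> tree_V N. length x < M \<and> k \<le> length x}" by auto
      also have "(\<Sum>x\<in>{x \<in> tree_V N. length x < M \<and> k \<le> length x}. b x k) \<le> n2 N u"
        unfolding b_def by (rule X_level_sum[OF u N])
      finally show "a ^ k * (\<Sum>x\<in>?B. if k \<le> length x then b x k else 0) \<le> a ^ k * n2 N u"
        using a0 by (intro mult_left_mono) auto
    qed (use a0 in auto)
    also have "\<dots> = 1 / (1 - a) * ((\<Sum>k<M. a ^ k) * n2 N u)" by (simp add: sum_distrib_right)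
    also have "\<dots> \<le> 1 / (1 - a) * (1 / (1 - a) * n2 N u)"
      using a0 n2_nonneg[of N u] by (intro mult_left_mono mult_right_mono geom_partial_le) auto
    also have "\<dots> = n2 N u / (1 - a)\<^sup>2" by (simp add: power2_eq_square)
    finally show ?thesis .
  qed
  show "Xop N q u \<in> l2 N" by (rule l2_intro(1)[OF _ main]) (auto simp: Xop_def)
  show "n2 N (Xop N q u) \<le> n2 N u / (1 - norm q * sqrt (real N))\<^sup>2"
    unfolding a_def[symmetric] by (rule l2_intro(2)[OF _ main]) (auto simp: Xop_def)
qed



lemma lap_lin:
  "tree_laplacian N (\<lambda>x. c * f x + d * g x) x = c * tree_laplacian N f x + d * tree_laplacian N g x"
  unfolding tree_laplacian_def
  by (simp add: sum.distrib sum_distrib_left algebra_simps sum_subtractf)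

lemma lap_diff:
  "tree_laplacian N (\<lambda>x. f x - g x) x = tree_laplacian N f x - tree_laplacian N g x"
  using lap_lin[of N 1 f "-1" g x] by simp

lemma sq4: fixes a b c d :: real
  shows "(a + b + c + d)\<^sup>2 \<le> 4 * (a\<^sup>2 + b\<^sup>2 + c\<^sup>2 + d\<^sup>2)"
proof -
  have "4 * (a\<^sup>2 + b\<^sup>2 + c\<^sup>2 + d\<^sup>2) - (a + b + c + d)\<^sup>2
      = (a-b)\<^sup>2+(a-c)\<^sup>2+(a-d)\<^sup>2+(b-c)\<^sup>2+(b-d)\<^sup>2+(c-d)\<^sup>2"
    by (simp add: power2_eq_square algebra_simps)
  moreover have "0 \<le> (a-b)\<^sup>2+(a-c)\<^sup>2+(a-d)\<^sup>2+(b-c)\<^sup>2+(b-d)\<^sup>2+(c-d)\<^sup>2" by simp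
  ultimately show ?thesis by linarith
qed

lemma sq2: fixes a b :: complex
  shows "(norm (a + b))\<^sup>2 \<le> 2 * (norm a)\<^sup>2 + 2 * (norm b)\<^sup>2"
proof -
  have "norm (a + b) \<le> norm a + norm b" by (rule norm_triangle_ineq)
  then have "(norm (a + b))\<^sup>2 \<le> (norm a + norm b)\<^sup>2" by (intro power_mono) auto
  also have "\<dots> \<le> 2 * (norm a)\<^sup>2 + 2 * (norm b)\<^sup>2"
    using sum_squares_bound[of "norm a" "norm b"] by (simp add: power2_eq_square algebra_simps)
  finally show ?thesis .
qed

lemma l2_comb:
  assumes f: "f \<in> l2 N" and g: "g \<in> l2 N"
  shows "(\<lambda>x. c * f x + d * g x) \<in> l2 N"
    "n2 N (\<lambda>x. c * f x + d * g x) \<le> 2 * (norm c)\<^sup>2 * n2 N f + 2 * (norm d)\<^sup>2 * n2 N g"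
proof -
  have main: "(\<Sum>x\<in>F. (norm (c * f x + d * g x))\<^sup>2) \<le> 2 * (norm c)\<^sup>2 * n2 N f + 2 * (norm d)\<^sup>2 * n2 N g"
    if "finite F" "F \<subseteq> tree_V N" for F
  proof -
    have "(\<Sum>x\<in>F. (norm (c * f x + d * g x))\<^sup>2) \<le> (\<Sum>x\<in>F. 2 * (norm c)\<^sup>2 * (norm (f x))\<^sup>2 + 2 * (norm d)\<^sup>2 * (norm (g x))\<^sup>2)"
    proof (rule sum_mono)
      fix x show "(norm (c * f x + d * g x))\<^sup>2 \<le> 2 * (norm c)\<^sup>2 * (norm (f x))\<^sup>2 + 2 * (norm d)\<^sup>2 * (norm (g x))\<^sup>2"
        using sq2[of "c * f x" "d * g x"] by (simp add: norm_mult power_mult_distrib)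
    qed
    also have "\<dots> = 2 * (norm c)\<^sup>2 * (\<Sum>x\<in>F. (norm (f x))\<^sup>2) + 2 * (norm d)\<^sup>2 * (\<Sum>x\<in>F. (norm (g x))\<^sup>2)"
      by (simp add: sum.distrib sum_distrib_left)
    also have "\<dots> \<le> 2 * (norm c)\<^sup>2 * n2 N f + 2 * (norm d)\<^sup>2 * n2 N g"
      using l2_sum_le[OF f that] l2_sum_le[OF g that]
      by (intro add_mono mult_left_mono) auto
    finally show ?thesis .
  qed
  have out: "\<And>x. x \<notin> tree_V N \<Longrightarrow> c * f x + d * g x = 0"
    using l2_zero_out[OF f] l2_zero_out[OF g] by simp
  show "(\<lambda>x. c * f x + d * g x) \<in> l2 N" by (rule l2_intro(1)[OF out main])
  show "n2 N (\<lambda>x. c * f x + d * g x) \<le> 2 * (norm c)\<^sup>2 * n2 N f + 2 * (norm d)\<^sup>2 * n2 N g"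
    by (rule l2_intro(2)[OF out main])
qed

lemma parent_sum_le:
  assumes v: "v \<in> l2 N" and F: "finite F" "F \<subseteq> tree_V N"
  shows "(\<Sum>x\<in>F - {[]}. (norm (v (butlast x)))\<^sup>2) \<le> real N * n2 N v"
proof -
  let ?Y = "butlast ` (F - {[]})"
  let ?h = "\<lambda>x. (norm (v (butlast x)))\<^sup>2"
  have Y: "finite ?Y" "?Y \<subseteq> tree_V N" using F by (auto simp: tree_V_def dest: in_set_butlastD)
  have inj: "inj_on (\<lambda>p. fst p @ snd p) (?Y \<times> Tw N 1)" by (auto simp: inj_on_def Tw_def)
  have sub: "F - {[]} \<subseteq> (\<lambda>p. fst p @ snd p) ` (?Y \<times> Tw N 1)"
  proof
    fix x assume x: "x \<in> F - {[]}"
    then have xe: "x = butlast x @ [last x]" by simp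
    have "last x \<in> set x" using x by simp
    moreover have "set x \<subseteq> {1..N}" using x F by (auto simp: tree_V_def)
    ultimately have "[last x] \<in> Tw N 1" by (auto simp: Tw_def)
    then show "x \<in> (\<lambda>p. fst p @ snd p) ` (?Y \<times> Tw N 1)"
      using x xe by (intro image_eqI[where x="(butlast x, [last x])"]) auto
  qed
  have "(\<Sum>x\<in>F - {[]}. ?h x) \<le> (\<Sum>x\<in>(\<lambda>p. fst p @ snd p) ` (?Y \<times> Tw N 1). ?h x)"
    using sub Y by (intro sum_mono2) auto
  also have "\<dots> = (\<Sum>p\<in>?Y \<times> Tw N 1. ?h (fst p @ snd p))"
    by (rule sum.reindex[OF inj, unfolded comp_def])
  also have "\<dots> = (\<Sum>p\<in>?Y \<times> Tw N 1. (norm (v (fst p)))\<^sup>2)"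
    by (intro sum.cong refl) (auto simp: Tw_def length_Suc_conv)
  also have "\<dots> = real N * (\<Sum>y\<in>?Y. (norm (v y))\<^sup>2)"
  proof -
    have "(\<Sum>p\<in>?Y \<times> Tw N 1. (norm (v (fst p)))\<^sup>2) = (\<Sum>y\<in>?Y. \<Sum>t\<in>Tw N 1. (norm (v y))\<^sup>2)"
      unfolding sum.cartesian_product by (simp add: split_def)
    then show ?thesis by (simp add: Tw_card sum_distrib_left)
  qed
  also have "\<dots> \<le> real N * n2 N v"
    by (intro mult_left_mono l2_sum_le[OF v Y]) auto
  finally show ?thesis .
qed

lemma lap_l2:
  assumes v: "v \<in> l2 N"
  shows "tree_laplacian N v \<in> l2 N"
proof (rule l2_intro(1))
  show "\<And>x. x \<notin> tree_V N \<Longrightarrow> tree_laplacian N v x = 0" by (simp add: tree_laplacian_def)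
  fix F assume F: "finite F" "F \<subseteq> tree_V N"
  define A where "A x = norm (of_nat N * v x)" for x
  define B where "B x = norm (\<Sum>i\<in>{1..N}. v (x @ [i]))" for x
  define C where "C x = (if x = [] then 0 else norm (v x))" for x
  define D where "D x = (if x = [] then 0 else norm (v (butlast x)))" for x
  have pw: "(norm (tree_laplacian N v x))\<^sup>2 \<le> 4 * ((A x)\<^sup>2 + (B x)\<^sup>2 + (C x)\<^sup>2 + (D x)\<^sup>2)"
    if "x \<in> tree_V N" for x
  proof -
    define E where "E = (if x = [] then 0 else v x - v (butlast x))"
    have E: "norm E \<le> C x + D x" unfolding E_def C_def D_def
      by (auto intro: norm_triangle_ineq4)
    have "norm (tree_laplacian N v x) = norm (of_nat N * v x - (\<Sum>i\<in>{1..N}. v (x @ [i])) + E)"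
      unfolding lap_eq[OF that] E_def ..
    also have "\<dots> \<le> norm (of_nat N * v x - (\<Sum>i\<in>{1..N}. v (x @ [i]))) + norm E"
      by (rule norm_triangle_ineq)
    also have "\<dots> \<le> A x + B x + norm E"
      unfolding A_def B_def by (intro add_mono norm_triangle_ineq4) auto
    finally have "norm (tree_laplacian N v x) \<le> A x + B x + C x + D x" using E by linarith
    then have "(norm (tree_laplacian N v x))\<^sup>2 \<le> (A x + B x + C x + D x)\<^sup>2"
      by (intro power_mono) auto
    also have "\<dots> \<le> 4 * ((A x)\<^sup>2 + (B x)\<^sup>2 + (C x)\<^sup>2 + (D x)\<^sup>2)" by (rule sq4)
    finally show ?thesis .
  qed
  have sA: "(\<Sum>x\<in>F. (A x)\<^sup>2) \<le> (real N)\<^sup>2 * n2 N v"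
    unfolding A_def using l2_sum_le[OF v F]
    by (simp add: norm_mult power_mult_distrib sum_distrib_left[symmetric] mult_left_mono)
  have sB: "(\<Sum>x\<in>F. (B x)\<^sup>2) \<le> real N * n2 N v"
  proof -
    have "(\<Sum>x\<in>F. (B x)\<^sup>2) \<le> (\<Sum>x\<in>F. real N * (\<Sum>t\<in>Tw N 1. (norm (v (x @ t)))\<^sup>2))"
    proof (intro sum_mono)
      fix x
      have "(B x)\<^sup>2 \<le> real (card {1..N}) * (\<Sum>i\<in>{1..N}. (norm (v (x @ [i])))\<^sup>2)"
        unfolding B_def by (rule CS_card_complex) simp
      then show "(B x)\<^sup>2 \<le> real N * (\<Sum>t\<in>Tw N 1. (norm (v (x @ t)))\<^sup>2)"
        using sum_Tw_1[where N=N and f="\<lambda>t. (norm (v (x @ t)))\<^sup>2"] by simp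
    qed
    also have "\<dots> \<le> real N * n2 N v"
      unfolding sum_distrib_left[symmetric] by (intro mult_left_mono sum_levels_le[OF v F]) auto
    finally show ?thesis .
  qed
  have sC: "(\<Sum>x\<in>F. (C x)\<^sup>2) \<le> n2 N v"
  proof -
    have "(\<Sum>x\<in>F. (C x)\<^sup>2) \<le> (\<Sum>x\<in>F. (norm (v x))\<^sup>2)"
      by (intro sum_mono) (simp add: C_def)
    then show ?thesis using l2_sum_le[OF v F] by linarith
  qed
  have sD: "(\<Sum>x\<in>F. (D x)\<^sup>2) \<le> real N * n2 N v"
  proof -
    have "(\<Sum>x\<in>F. (D x)\<^sup>2) = (\<Sum>x\<in>F - {[]}. (D x)\<^sup>2)"
      using F by (intro sum.mono_neutral_right) (auto simp: D_def)
    also have "\<dots> = (\<Sum>x\<in>F - {[]}. (norm (v (butlast x)))\<^sup>2)"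
      by (intro sum.cong refl) (auto simp: D_def)
    also have "\<dots> \<le> real N * n2 N v" by (rule parent_sum_le[OF v F])
    finally show ?thesis .
  qed
  have "(\<Sum>x\<in>F. (norm (tree_laplacian N v x))\<^sup>2) \<le> (\<Sum>x\<in>F. 4 * ((A x)\<^sup>2 + (B x)\<^sup>2 + (C x)\<^sup>2 + (D x)\<^sup>2))"
    using F by (intro sum_mono pw) auto
  also have "\<dots> = 4 * ((\<Sum>x\<in>F. (A x)\<^sup>2) + (\<Sum>x\<in>F. (B x)\<^sup>2) + (\<Sum>x\<in>F. (C x)\<^sup>2) + (\<Sum>x\<in>F. (D x)\<^sup>2))"
    by (simp add: sum.distrib sum_distrib_left)
  also have "\<dots> \<le> 4 * ((real N)\<^sup>2 * n2 N v + real N * n2 N v + n2 N v + real N * n2 N v)"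
    using sA sB sC sD by simp
  finally show "(\<Sum>x\<in>F. (norm (tree_laplacian N v x))\<^sup>2) \<le> 4 * ((real N)\<^sup>2 * n2 N v + real N * n2 N v + n2 N v + real N * n2 N v)" .
qed



lemma lap_scale: "tree_laplacian N (\<lambda>x. c * f x) x = c * tree_laplacian N f x"
  using lap_lin[of N c f 0 f x] by simp

lemma G_l2:
  assumes a: "norm q * sqrt (real N) < 1"
  shows "rad N (\<lambda>n. q ^ Suc n) \<in> l2 N"
proof (rule l2_intro(1))
  show "\<And>x. x \<notin> tree_V N \<Longrightarrow> rad N (\<lambda>n. q ^ Suc n) x = 0" by (simp add: rad_def)
  define a where "a = norm q * sqrt (real N)"
  have a0: "0 \<le> a\<^sup>2" "a\<^sup>2 < 1" using a unfolding a_def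
    by (auto simp: abs_square_less_1)
  fix F assume F: "finite F" "F \<subseteq> tree_V N"
  define M where "M = Suc (\<Sum>x\<in>F. length x)"
  let ?B = "{y \<in> tree_V N. length y < M}"
  have FB: "F \<subseteq> ?B"
  proof
    fix x assume "x \<in> F"
    then have "length x \<le> (\<Sum>x\<in>F. length x)" using F(1) by (intro member_le_sum) auto
    then show "x \<in> ?B" using \<open>x \<in> F\<close> F(2) unfolding M_def by auto
  qed
  have "(\<Sum>x\<in>F. (norm (rad N (\<lambda>n. q ^ Suc n) x))\<^sup>2) \<le> (\<Sum>x\<in>?B. (norm (rad N (\<lambda>n. q ^ Suc n) x))\<^sup>2)"
    using FB ball_finite by (intro sum_mono2) auto
  also have "\<dots> = (\<Sum>n<M. real N ^ n * (norm (q ^ Suc n))\<^sup>2)" by (rule rad_sum)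
  also have "\<dots> = (\<Sum>n<M. (norm q)\<^sup>2 * (a\<^sup>2) ^ n)"
  proof (rule sum.cong[OF refl])
    fix n
    have "(norm (q ^ Suc n))\<^sup>2 = (norm q)\<^sup>2 * ((norm q)\<^sup>2) ^ n"
      by (metis norm_power power_Suc power_mult_distrib power_commutes power2_eq_square)
    moreover have "real N ^ n * ((norm q)\<^sup>2 * ((norm q)\<^sup>2) ^ n) = (norm q)\<^sup>2 * ((norm q * sqrt (real N))\<^sup>2) ^ n"
      by (simp add: power_mult_distrib)
    ultimately show "real N ^ n * (norm (q ^ Suc n))\<^sup>2 = (norm q)\<^sup>2 * (a\<^sup>2) ^ n"
      unfolding a_def by simp
  qed
  also have "\<dots> = (norm q)\<^sup>2 * (\<Sum>n<M. (a\<^sup>2) ^ n)" by (simp add: sum_distrib_left)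
  also have "\<dots> \<le> (norm q)\<^sup>2 * (1 / (1 - a\<^sup>2))"
    using a0 by (intro mult_left_mono geom_partial_le) auto
  finally show "(\<Sum>x\<in>F. (norm (rad N (\<lambda>n. q ^ Suc n) x))\<^sup>2) \<le> (norm q)\<^sup>2 * (1 / (1 - a\<^sup>2))" .
qed

lemma G_eq:
  assumes e1: "q * (of_nat N + 1 - mu) = r\<^sup>2 + 1" and e2: "of_nat N * q\<^sup>2 = r\<^sup>2"
  shows "tree_laplacian N (rad N (\<lambda>n. q ^ Suc n)) x - mu * rad N (\<lambda>n. q ^ Suc n) x
          = (if x = [] then 1 - q else 0)"
proof (cases "x \<in> tree_V N")
  case False
  then show ?thesis by (auto simp: lap_rad rad_def)
next
  case True
  show ?thesis
  proof (cases "length x")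
    case 0
    then have "x = []" by simp
    have "of_nat N * q - of_nat N * q\<^sup>2 - mu * q = q * (of_nat N + 1 - mu) - q - of_nat N * q\<^sup>2"
      by (simp add: algebra_simps)
    also have "\<dots> = 1 - q" unfolding e1 e2 by simp
    finally show ?thesis using True \<open>x = []\<close> unfolding lap_rad by (simp add: rad_def power2_eq_square)
  next
    case (Suc m)
    then have "x \<noteq> []" by auto
    have "of_nat N * q ^ Suc (Suc m) - of_nat N * q ^ Suc (Suc (Suc m)) + (q ^ Suc (Suc m) - q ^ Suc m)
          - mu * q ^ Suc (Suc m) = q ^ Suc m * (q * (of_nat N + 1 - mu) - of_nat N * q\<^sup>2 - 1)"
      by (simp add: algebra_simps power2_eq_square)
    also have "\<dots> = 0" unfolding e1 e2 by simp
    finally show ?thesis using True \<open>x \<noteq> []\<close> Suc unfolding lap_rad by (simp add: rad_def)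
  qed
qed

lemma XY_eq:
  assumes e1: "q * (of_nat N + 1 - mu) = r\<^sup>2 + 1" and e2: "of_nat N * q\<^sup>2 = r\<^sup>2"
    and w: "w \<in> l2 N" and a: "norm q * sqrt (real N) < 1" and x: "x \<in> tree_V N"
  shows "q * tree_laplacian N (Xop N q (Yop N q w)) x - mu * (q * Xop N q (Yop N q w) x)
          = w x - (if x = [] then q * Yop N q w [] else 0)"
proof -
  let ?u = "Yop N q w"
  let ?h = "Xop N q ?u"
  have xi: "x @ [i] \<in> tree_V N" if "i \<in> {1..N}" for i using x that unfolding tree_V_def by auto
  have ch: "(\<Sum>i\<in>{1..N}. ?h (x @ [i])) = (\<Sum>i\<in>{1..N}. ?u (x @ [i])) + of_nat N * (q * ?h x)"
  proof -
    have "(\<Sum>i\<in>{1..N}. ?h (x @ [i])) = (\<Sum>i\<in>{1..N}. ?u (x @ [i]) + q * ?h x)"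
      by (intro sum.cong refl X_snoc xi)
    then show ?thesis by (simp add: sum.distrib)
  qed
  have Y: "?u x - q * (\<Sum>i\<in>{1..N}. ?u (x @ [i])) = w x" by (rule Y_eq[OF w x a])
  show ?thesis
  proof (cases "x = []")
    case True
    have h0: "?h [] = ?u []" by (rule X_Nil)
    have "q * tree_laplacian N ?h x - mu * (q * ?h x)
        = q * (of_nat N + 1 - mu) * ?h [] - of_nat N * q\<^sup>2 * ?h [] - q * ?h [] - q * (\<Sum>i\<in>{1..N}. ?u (x @ [i]))"
      unfolding lap_eq[OF x] ch using True by (simp add: algebra_simps power2_eq_square)
    also have "\<dots> = ?u x - q * (\<Sum>i\<in>{1..N}. ?u (x @ [i])) - q * ?u []"
      unfolding e1 e2 h0 using True by (simp add: algebra_simps)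
    finally show ?thesis using Y True by simp
  next
    case False
    define p where "p = butlast x"
    have xp: "x = p @ [last x]" unfolding p_def using False by simp
    have hx: "?h x = ?u x + q * ?h p" using X_snoc[of p "last x" N q ?u] x xp by simp
    have "q * tree_laplacian N ?h x - mu * (q * ?h x)
        = q * (of_nat N + 1 - mu) * ?h x - of_nat N * q\<^sup>2 * ?h x - q * ?h p - q * (\<Sum>i\<in>{1..N}. ?u (x @ [i]))"
      unfolding lap_eq[OF x] ch using False by (simp add: algebra_simps power2_eq_square p_def)
    also have "\<dots> = ?h x - q * ?h p - q * (\<Sum>i\<in>{1..N}. ?u (x @ [i]))"
      unfolding e1 e2 by (simp add: algebra_simps)
    also have "\<dots> = w x" using Y hx by simp
    finally show ?thesis using False by simp
  qed
qed



lemma resolvent: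
  assumes N: "N \<ge> 1"
    and mu: "mu \<notin> complex_of_real ` {real N + 1 - 2 * sqrt (real N) .. real N + 1 + 2 * sqrt (real N)}"
  shows "mu \<notin> tree_spectrum N"
proof -
  define s where "s = complex_of_real (sqrt (real N))"
  have sN: "s\<^sup>2 = of_nat N" unfolding s_def
    by (metis of_real_of_nat_eq of_real_power of_nat_0_le_iff real_sqrt_pow2)
  have sn: "norm s = sqrt (real N)" unfolding s_def by simp
  have s0: "s \<noteq> 0" using N unfolding s_def by simp
  obtain r where r: "r \<noteq> 0" "norm r \<le> 1" "(of_nat N + 1 - mu) / s = r + inverse r"
    and r1: "norm r = 1 \<Longrightarrow> (of_nat N + 1 - mu) / s \<in> \<real> \<and> \<bar>Re ((of_nat N + 1 - mu) / s)\<bar> \<le> 2"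
    using root_choice by metis
  have rl: "norm r < 1"
  proof (rule ccontr)
    assume "\<not> norm r < 1"
    then have "norm r = 1" using r(2) by simp
    then obtain l where l: "(of_nat N + 1 - mu) / s = complex_of_real l" "\<bar>l\<bar> \<le> 2"
      using r1 by (metis Reals_cases Re_complex_of_real)
    have "mu = complex_of_real (real N + 1 - sqrt (real N) * l)"
    proof -
      have "of_nat N + 1 - mu = s * complex_of_real l" using l(1) s0 by (simp add: field_simps)
      then show ?thesis unfolding s_def by (simp add: algebra_simps)
    qed
    moreover have "sqrt (real N) * \<bar>l\<bar> \<le> sqrt (real N) * 2" using l(2) by (intro mult_left_mono) auto
    then have "\<bar>sqrt (real N) * l\<bar> \<le> 2 * sqrt (real N)" by (simp add: abs_mult mult.commute)
    then have "real N + 1 - sqrt (real N) * l \<in> {real N + 1 - 2 * sqrt (real N) .. real N + 1 + 2 * sqrt (real N)}"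
      unfolding abs_le_iff by auto
    ultimately show False using mu by blast
  qed
  define q where "q = r / s"
  have aq: "norm q * sqrt (real N) = norm r" unfolding q_def using s0 N by (simp add: norm_divide sn)
  have a: "norm q * sqrt (real N) < 1" using aq rl by simp
  have lam: "of_nat N + 1 - mu = s * (r + inverse r)" using r(3) s0 by (simp add: field_simps)
  have e1: "q * (of_nat N + 1 - mu) = r\<^sup>2 + 1" unfolding lam q_def using s0 r(1)
    by (simp add: field_simps power2_eq_square)
  have e2: "of_nat N * q\<^sup>2 = r\<^sup>2" unfolding q_def sN[symmetric] using s0 by (simp add: field_simps)
  have q1: "q \<noteq> 1"
  proof
    assume "q = 1"
    then have "norm r = sqrt (real N)" using aq by simp
    then show False using rl N by simp
  qed
  define G where "G = rad N (\<lambda>n. q ^ Suc n)"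
  have Gl2: "G \<in> l2 N" unfolding G_def by (rule G_l2[OF a])
  define S where "S w = (\<lambda>x. q * Xop N q (Yop N q w) x + (q * Yop N q w [] / (1 - q)) * G x)" for w
  have right: "tree_laplacian N (S w) x - mu * S w x = w x" if w: "w \<in> l2 N" for w x
  proof -
    define \<kappa> where "\<kappa> = q * Yop N q w [] / (1 - q)"
    have "tree_laplacian N (S w) x - mu * S w x
        = (q * tree_laplacian N (Xop N q (Yop N q w)) x - mu * (q * Xop N q (Yop N q w) x))
          + \<kappa> * (tree_laplacian N G x - mu * G x)"
      unfolding S_def \<kappa>_def[symmetric] lap_lin by (simp add: algebra_simps)
    also have "\<dots> = w x"
    proof (cases "x \<in> tree_V N")
      case True
      show ?thesis unfolding XY_eq[OF e1 e2 w a True] G_def G_eq[OF e1 e2] \<kappa>_def using q1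
        by (auto simp: field_simps)
    next
      case False
      then show ?thesis using l2_zero_out[OF w False]
        by (simp add: tree_laplacian_def Xop_def G_def rad_def)
    qed
    finally show ?thesis .
  qed
  have Sl2: "S w \<in> l2 N" "n2 N (S w) \<le> (2 * (norm q)\<^sup>2 / (1 - norm r) ^ 4
      + 2 * (norm q / norm (1 - q))\<^sup>2 * n2 N G / (1 - norm r)\<^sup>2) * n2 N w" if w: "w \<in> l2 N" for w
  proof -
    note Y = Y_l2[OF w a]
    note X = X_l2[OF Y(1) N a]
    let ?\<kappa> = "q * Yop N q w [] / (1 - q)"
    have c: "S w = (\<lambda>x. q * Xop N q (Yop N q w) x + ?\<kappa> * G x)" unfolding S_def ..
    note C = l2_comb[OF X(1) Gl2, of q ?\<kappa>]
    show "S w \<in> l2 N" unfolding c by (rule C(1))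
    have ra: "0 \<le> 1 - norm r" "1 - norm r > 0" using rl by auto
    have u0: "(norm (Yop N q w []))\<^sup>2 \<le> n2 N (Yop N q w)"
      using l2_sum_le[OF Y(1), of "{[]}"] by simp
    have k: "(norm ?\<kappa>)\<^sup>2 \<le> (norm q / norm (1 - q))\<^sup>2 * (n2 N w / (1 - norm r)\<^sup>2)"
    proof -
      have "(norm ?\<kappa>)\<^sup>2 = (norm q / norm (1 - q))\<^sup>2 * (norm (Yop N q w []))\<^sup>2"
        by (simp add: norm_mult norm_divide power_mult_distrib power_divide)
      also have "\<dots> \<le> (norm q / norm (1 - q))\<^sup>2 * (n2 N w / (1 - norm r)\<^sup>2)"
        using u0 Y(2) aq by (intro mult_left_mono) auto
      finally show ?thesis .
    qed
    have hx: "n2 N (Xop N q (Yop N q w)) \<le> n2 N w / (1 - norm r) ^ 4"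
    proof -
      have "n2 N (Xop N q (Yop N q w)) \<le> n2 N (Yop N q w) / (1 - norm r)\<^sup>2" using X(2) aq by simp
      also have "\<dots> \<le> (n2 N w / (1 - norm r)\<^sup>2) / (1 - norm r)\<^sup>2"
        using Y(2) aq ra by (intro divide_right_mono) auto
      also have "\<dots> = n2 N w / (1 - norm r) ^ 4" by (simp add: power_mult_distrib flip: power_add)
      finally show ?thesis .
    qed
    have "n2 N (S w) \<le> 2 * (norm q)\<^sup>2 * n2 N (Xop N q (Yop N q w)) + 2 * (norm ?\<kappa>)\<^sup>2 * n2 N G"
      unfolding c by (rule C(2))
    also have "\<dots> \<le> 2 * (norm q)\<^sup>2 * (n2 N w / (1 - norm r) ^ 4)
        + 2 * ((norm q / norm (1 - q))\<^sup>2 * (n2 N w / (1 - norm r)\<^sup>2)) * n2 N G"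
      using hx k n2_nonneg[of N G] by (intro add_mono mult_left_mono mult_right_mono) auto
    also have "\<dots> = (2 * (norm q)\<^sup>2 / (1 - norm r) ^ 4
      + 2 * (norm q / norm (1 - q))\<^sup>2 * n2 N G / (1 - norm r)\<^sup>2) * n2 N w"
      by (simp add: field_simps)
    finally show "n2 N (S w) \<le> (2 * (norm q)\<^sup>2 / (1 - norm r) ^ 4
      + 2 * (norm q / norm (1 - q))\<^sup>2 * n2 N G / (1 - norm r)\<^sup>2) * n2 N w" .
  qed
  define K where "K = 2 * (norm q)\<^sup>2 / (1 - norm r) ^ 4 + 2 * (norm q / norm (1 - q))\<^sup>2 * n2 N G / (1 - norm r)\<^sup>2"
  have bnd: "l2_norm N (S w) \<le> sqrt K * l2_norm N w" if "w \<in> l2 N" for w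
  proof -
    have "sqrt (n2 N (S w)) \<le> sqrt (K * n2 N w)"
      using Sl2(2)[OF that] unfolding K_def[symmetric] by (rule real_sqrt_le_mono)
    then show ?thesis unfolding l2_norm_n2 real_sqrt_mult .
  qed
  have left: "S (\<lambda>x. tree_laplacian N v x - mu * v x) = v" if v: "v \<in> l2 N" for v
  proof -
    define w where "w = (\<lambda>x. tree_laplacian N v x - mu * v x)"
    have we: "(\<lambda>x. 1 * tree_laplacian N v x + (- mu) * v x) = w"
      unfolding w_def by (rule ext) simp
    have wl2: "w \<in> l2 N"
      using l2_comb(1)[OF lap_l2[OF v] v, of 1 "- mu"] unfolding we .
    define d where "d = (\<lambda>x. S w x - v x)"
    have de: "(\<lambda>x. 1 * S w x + (- 1) * v x) = d"
      unfolding d_def by (rule ext) simp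
    have dl2: "d \<in> l2 N" using l2_comb(1)[OF Sl2(1)[OF wl2] v, of 1 "-1"] unfolding de .
    have deq: "tree_laplacian N d x = mu * d x" for x
    proof -
      have l: "tree_laplacian N d x = tree_laplacian N (S w) x - tree_laplacian N v x"
        unfolding d_def by (rule lap_diff)
      have "tree_laplacian N (S w) x - mu * S w x = w x" by (rule right[OF wl2])
      then have "tree_laplacian N (S w) x - mu * S w x = tree_laplacian N v x - mu * v x"
        unfolding w_def .
      then have "tree_laplacian N (S w) x - tree_laplacian N v x = mu * (S w x - v x)"
        by (simp add: algebra_simps)
      then have "tree_laplacian N d x = mu * (S w x - v x)" using l by simp
      then show ?thesis by (simp add: d_def)
    qed
    have "d = (\<lambda>_. 0)" by (rule no_eig[OF N dl2 deq])
    then have "S w x = v x" for x unfolding d_def by (metis right_minus_eq)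
    then have "S w = v" by (rule ext)
    then show ?thesis unfolding w_def .
  qed
  have P: "(\<forall>v\<in>l2 N. S v \<in> l2 N) \<and> (\<exists>C. \<forall>v\<in>l2 N. l2_norm N (S v) \<le> C * l2_norm N v) \<and>
        (\<forall>v\<in>l2 N. S (\<lambda>x. tree_laplacian N v x - mu * v x) = v) \<and>
        (\<forall>v\<in>l2 N. (\<lambda>x. tree_laplacian N (S v) x - mu * S v x) = v)"
  proof (intro conjI ballI exI)
    show "S v \<in> l2 N" if "v \<in> l2 N" for v using Sl2(1)[OF that] .
    show "l2_norm N (S v) \<le> sqrt K * l2_norm N v" if "v \<in> l2 N" for v using bnd[OF that] .
    show "S (\<lambda>x. tree_laplacian N v x - mu * v x) = v" if "v \<in> l2 N" for v using left[OF that] .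
    show "(\<lambda>x. tree_laplacian N (S v) x - mu * S v x) = v" if "v \<in> l2 N" for v
      using right[OF that] by (intro ext)
  qed
  then show ?thesis unfolding tree_spectrum_def by blast
qed

theorem proposition3p20:
  fixes N :: nat
  assumes "N \<ge> 1"
  shows "tree_spectrum N = complex_of_real ` {real N + 1 - 2 * sqrt (real N) .. real N + 1 + 2 * sqrt (real N)}
         \<and> tree_eigenvalues N = {}"
proof
  show "tree_spectrum N = complex_of_real ` {real N + 1 - 2 * sqrt (real N) .. real N + 1 + 2 * sqrt (real N)}"
  proof
    show "tree_spectrum N \<subseteq> complex_of_real ` {real N + 1 - 2 * sqrt (real N) .. real N + 1 + 2 * sqrt (real N)}"
    proof
      fix mu assume "mu \<in> tree_spectrum N"
      then show "mu \<in> complex_of_real ` {real N + 1 - 2 * sqrt (real N) .. real N + 1 + 2 * sqrt (real N)}"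
        using resolvent[OF assms, of mu] by blast
    qed
    show "complex_of_real ` {real N + 1 - 2 * sqrt (real N) .. real N + 1 + 2 * sqrt (real N)} \<subseteq> tree_spectrum N"
    proof
      fix z assume "z \<in> complex_of_real ` {real N + 1 - 2 * sqrt (real N) .. real N + 1 + 2 * sqrt (real N)}"
      then obtain t where "t \<in> {real N + 1 - 2 * sqrt (real N) .. real N + 1 + 2 * sqrt (real N)}" "z = complex_of_real t"
        by blast
      then show "z \<in> tree_spectrum N" using in_spec[OF assms, of t] by simp
    qed
  qed
  show "tree_eigenvalues N = {}"
  proof (rule equals0I)
    fix mu assume "mu \<in> tree_eigenvalues N"
    then obtain v where v: "v \<in> l2 N" "v \<noteq> (\<lambda>_. 0)" "tree_laplacian N v = (\<lambda>x. mu * v x)"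
      unfolding tree_eigenvalues_def by blast
    have e: "\<And>x. tree_laplacian N v x = mu * v x" using v(3) by simp
    have "v = (\<lambda>_. 0)" by (rule no_eig[OF assms v(1) e])
    then show False using v(2) by simp
  qed
qed

end
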